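(* Let $H_1,H_2$ be Hermitian matrices, $f_1,f_2:[0,T]\to\mathbb{R}$ twice continuously differentiable, $H(t)=f_1(t)H_1+f_2(t)H_2$, and $0<h\le T$. Writing $\|f\|$ for $\|f\|_\infty$, the one-step errors satisfy: (1) $\|U_{s,1}(h,0)-U(h,0)\|\le \alpha_{s,1}h^2+\beta_{s,1}h^3$ with $\alpha_{s,1}=\frac12\|f_1'\|\|H_1\|+\frac12\|f_2'\|\|H_2\|+\frac12\|f_1\|\|f_2\|\|[H_1,H_2]\|$ and $\beta_{s,1}=\frac16\|f_1\|\|f_2'\|\|[H_1,H_2]\|$. (2) $\|U_{g,1}(h,0)-U(h,0)\|\le\alpha_{g,1}h^2$ with $\alpha_{g,1}=\frac12\|f_1\|\|f_2\|\|[H_1,H_2]\|$. (3) $\|U_{s,2}(h,0)-U(h,0)\|\le\alpha_{s,2}h^3+\beta_{s,2}h^4+\gamma_{s,2}h^5$ with $\alpha_{s,2}=\frac{7}{24}\|f_1''\|\|H_1\|+\frac1{12}\|f_1'\|\|f_2\|\|H_1\|+\frac7{24}\|f_2''\|\|H_2\|+\frac16(\|f_1'\|\|f_2\|+\|f_1\|\|f_2'\|)\|[H_1,H_2]\|+\frac1{24}\|f_1\|^2\|f_2\|\|[H_1,[H_1,H_2]]\|+\frac1{12}\|f_1\|\|f_2\|^2\|[H_2,[H_1,H_2]]\|$, $\beta_{s,2}=\frac1{64}\|f_1'\|\|f_2'\|\|H_1\|+\big(\frac1{192}\|f_1\|\|f_2''\|+\frac1{192}\|f_1''\|\|f_2\|+\frac1{48}\|f_1'\|\|f_2'\|\big)\|[H_1,H_2]\|+\frac1{96}\|f_1\|\|f_1'\|\|f_2\|\|[H_1,[H_1,H_2]]\|+\frac1{48}\|f_1\|\|f_2\|\|f_2'\|\|[H_2,[H_1,H_2]]\|$,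 $\gamma_{s,2}=\frac1{960}\|f_1'\|^2\|f_2\|\|[H_1,[H_1,H_2]]\|+\frac1{480}\|f_1\|\|f_2'\|^2\|[H_2,[H_1,H_2]]\|$. (4) $\|U_{g,2}(h,0)-U(h,0)\|\le\alpha_{g,2}h^3$ with $\alpha_{g,2}=\big(\frac7{12}\|f_1\|\|f_2'\|+\frac{11}{24}\|f_1'\|\|f_2\|\big)\|[H_1,H_2]\|+\frac38\|f_1\|^2\|f_2\|\|[H_1,[H_1,H_2]]\|+\frac1{12}\|f_1\|\|f_2\|^2\|[H_2,[H_2,H_1]]\|$.
   Context: $\|\cdot\|$ on matrices is the operator 2-norm; $\|f\|_\infty=\sup_{t\in[0,T]}|f(t)|$. $U(t,s)$ is the exact evolution: $\partial_tU(t,s)=-\mathrm{i} H(t)U(t,s)$, $U(s,s)=I$. The Trotter steps are $U_{s,1}(t+h,t)=\exp(-\mathrm{i} f_2(t+h)H_2h)\exp(-\mathrm{i} f_1(t+h)H_1h)$; $U_{g,1}(t+h,t)=\exp(-\mathrm{i}\int_t^{t+h}f_2(s)ds\,H_2)\exp(-\mathrm{i}\int_t^{t+h}f_1(s)ds\,H_1)$; $U_{s,2}(t+h,t)=\exp(-\frac{\mathrm{i} h}{2}f_1(t+h/2)H_1)\exp(-\mathrm{i} hf_2(t+h/2)H_2)\exp(-\frac{\mathrm{i} h}{2}f_1(t+h/2)H_1)$; $U_{g,2}(t+h,t)=\exp(-\mathrm{i}\int_{t+h/2}^{t+h}f_1(s)ds\,H_1)\exp(-\mathrm{i}\int_t^{t+h}f_2(s)ds\,H_2)\exp(-\mathrm{i}\int_t^{t+h/2}f_1(s)ds\,H_1)$.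 *)

theory Defs
  imports "HOL-Analysis.Analysis"
begin

type_synonym 'n cmat = "complex^'n^'n"

definition cscale :: "complex \<Rightarrow> 'n::finite cmat \<Rightarrow> 'n cmat" where
  "cscale c A = (\<chi> i j. c * A$i$j)"

definition mpow :: "'n::finite cmat \<Rightarrow> nat \<Rightarrow> 'n cmat" where
  "mpow A k = (((**) A) ^^ k) (mat 1)"

definition mexp :: "'n::finite cmat \<Rightarrow> 'n cmat" where
  "mexp A = (\<Sum>k. (1 / fact k) *\<^sub>R mpow A k)"

definition opnorm :: "'n::finite cmat \<Rightarrow> real" where
  "opnorm A = onorm (\<lambda>x. A *v x)"

definition hermitian :: "'n::finite cmat \<Rightarrow> bool" where
  "hermitian A \<longleftrightarrow> (\<forall>i j. A$i$j = cnj (A$j$i))"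

definition comm :: "'n::finite cmat \<Rightarrow> 'n cmat \<Rightarrow> 'n cmat" where
  "comm A B = A ** B - B ** A"

definition supn :: "real \<Rightarrow> (real \<Rightarrow> real) \<Rightarrow> real" where
  "supn T g = (SUP t\<in>{0..T}. \<bar>g t\<bar>)"

definition Ham :: "(real \<Rightarrow> real) \<Rightarrow> (real \<Rightarrow> real) \<Rightarrow> 'n::finite cmat \<Rightarrow> 'n cmat \<Rightarrow> real \<Rightarrow> 'n cmat" where
  "Ham f1 f2 H1 H2 t = cscale (complex_of_real (f1 t)) H1 + cscale (complex_of_real (f2 t)) H2"

definition eprop :: "real \<Rightarrow> 'n::finite cmat \<Rightarrow> 'n cmat" where
  "eprop a H = mexp (cscale (- \<i> * complex_of_real a) H)"

definition Us1 :: "(real \<Rightarrow> real) \<Rightarrow> (real \<Rightarrow> real) \<Rightarrow> 'n::finite cmat \<Rightarrow> 'n cmat \<Rightarrow> real \<Rightarrow> real \<Rightarrow> 'n cmat" where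
  "Us1 f1 f2 H1 H2 t h = eprop (f2 (t+h) * h) H2 ** eprop (f1 (t+h) * h) H1"

definition Ug1 :: "(real \<Rightarrow> real) \<Rightarrow> (real \<Rightarrow> real) \<Rightarrow> 'n::finite cmat \<Rightarrow> 'n cmat \<Rightarrow> real \<Rightarrow> real \<Rightarrow> 'n cmat" where
  "Ug1 f1 f2 H1 H2 t h = eprop (integral {t..t+h} f2) H2 ** eprop (integral {t..t+h} f1) H1"

definition Us2 :: "(real \<Rightarrow> real) \<Rightarrow> (real \<Rightarrow> real) \<Rightarrow> 'n::finite cmat \<Rightarrow> 'n cmat \<Rightarrow> real \<Rightarrow> real \<Rightarrow> 'n cmat" where
  "Us2 f1 f2 H1 H2 t h =
     eprop (h/2 * f1 (t + h/2)) H1 ** eprop (h * f2 (t + h/2)) H2 ** eprop (h/2 * f1 (t + h/2)) H1"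

definition Ug2 :: "(real \<Rightarrow> real) \<Rightarrow> (real \<Rightarrow> real) \<Rightarrow> 'n::finite cmat \<Rightarrow> 'n cmat \<Rightarrow> real \<Rightarrow> real \<Rightarrow> 'n cmat" where
  "Ug2 f1 f2 H1 H2 t h =
     eprop (integral {t+h/2..t+h} f1) H1 ** eprop (integral {t..t+h} f2) H2
       ** eprop (integral {t..t+h/2} f1) H1"

end

theory Submission
  imports Defs
begin
typedef (overloaded) 'n sqm = "UNIV :: ('n::finite) cmat set" by simp

lemma mat_scaleR_mult_left: "((r::real) *\<^sub>R (A::'n::finite cmat)) ** B = r *\<^sub>R (A ** B)"
  by (simp add: vec_eq_iff matrix_matrix_mult_def scaleR_sum_right)
lemma mat_scaleR_mult_right: "(A::'n::finite cmat) ** ((r::real) *\<^sub>R B) = r *\<^sub>R (A ** B)"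
  by (simp add: vec_eq_iff matrix_matrix_mult_def scaleR_sum_right)
lemma mat_add_rdistrib: "((A::'n::finite cmat) + B) ** C = A ** C + B ** C"
  by (simp add: vec_eq_iff matrix_matrix_mult_def sum.distrib distrib_right)
lemma mat_vec_scaleR: "((r::real) *\<^sub>R (A::'n::finite cmat)) *v v = r *\<^sub>R (A *v v)"
  by (simp add: vec_eq_iff matrix_vector_mult_def scaleR_sum_right)

lemma blA: "bounded_linear (\<lambda>v. (A::'n::finite cmat) *v v)"
  by simp

lemma mat_entry_by_vec: "(A::'n::finite cmat) $ i $ j = (A *v axis j 1) $ i"
  by (simp add: matrix_vector_mult_def axis_def if_distrib cong: if_cong)

lemma mat_eq0_iff: "(\<forall>v. (A::'n::finite cmat) *v v = 0) \<longleftrightarrow> A = 0"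
  by (metis mat_entry_by_vec matrix_vector_mult_0 vec_eq_iff zero_index)

lemma opnorm_vec: "norm ((A::'n::finite cmat) *v v) \<le> opnorm A * norm v"
  unfolding opnorm_def by (rule onorm[OF blA])

lemma opnorm_nonneg: "0 \<le> opnorm (A::'n::finite cmat)"
  unfolding opnorm_def by (rule onorm_pos_le[OF blA])

lemma opnorm_le: "(\<And>v. norm ((A::'n::finite cmat) *v v) \<le> b * norm v) \<Longrightarrow> opnorm A \<le> b"
  unfolding opnorm_def by (rule onorm_le)

lemma nth_le: "norm ((x::'a::real_normed_vector^'m::finite) $ k) \<le> norm x"
  unfolding norm_vec_def by (rule member_le_L2_set) simp_all

lemma norm_le_l1_gen: "norm (x::'a::real_normed_vector^'m::finite) \<le> (\<Sum>i\<in>UNIV. norm (x $ i))"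
  unfolding norm_vec_def by (rule L2_set_le_sum) simp

lemma norm_axis_c: "norm (axis (j::'m::finite) (1::complex)) = 1"
proof -
  have eq: "(\<lambda>i. (norm (axis j (1::complex) $ i))\<^sup>2) = (\<lambda>i. if i = j then 1 else 0)"
    by (auto simp: axis_def fun_eq_iff)
  show ?thesis unfolding norm_vec_def L2_set_def eq by simp
qed

lemma entry_le_opnorm: "norm ((A::'n::finite cmat) $ i $ j) \<le> opnorm A"
proof -
  have "norm (A $ i $ j) = norm ((A *v axis j 1) $ i)" by (simp add: mat_entry_by_vec[symmetric])
  also have "\<dots> \<le> norm (A *v axis j 1)" by (rule nth_le)
  also have "\<dots> \<le> opnorm A * norm (axis j (1::complex))" by (rule opnorm_vec)
  finally show ?thesis by (simp add: norm_axis_c)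
qed

lemma vecnorm_le_opnorm: "norm (A::'n::finite cmat) \<le> real CARD('n) * real CARD('n) * opnorm A"
proof -
  have "norm A \<le> (\<Sum>i\<in>UNIV. norm (A $ i))" by (rule norm_le_l1_gen)
  also have "\<dots> \<le> (\<Sum>i\<in>(UNIV::'n set). real CARD('n) * opnorm A)"
  proof (rule sum_mono)
    fix i
    have "norm (A $ i) \<le> (\<Sum>j\<in>UNIV. norm (A $ i $ j))" by (rule norm_le_l1_gen)
    also have "\<dots> \<le> (\<Sum>j\<in>(UNIV::'n set). opnorm A)" by (rule sum_mono) (rule entry_le_opnorm)
    finally show "norm (A $ i) \<le> real CARD('n) * opnorm A" by simp
  qed
  finally show ?thesis by (simp add: mult.assoc)
qed

lemma opnorm_le_vecnorm: "opnorm (A::'n::finite cmat) \<le> real CARD('n) * real CARD('n) * norm A"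
proof (rule opnorm_le)
  fix v :: "complex^'n"
  have "norm (A *v v) \<le> (\<Sum>i\<in>UNIV. norm ((A *v v) $ i))" by (rule norm_le_l1_gen)
  also have "\<dots> \<le> (\<Sum>i\<in>(UNIV::'n set). real CARD('n) * (norm A * norm v))"
  proof (rule sum_mono)
    fix i
    have "(A *v v) $ i = (\<Sum>j\<in>UNIV. A $ i $ j * v $ j)" by (simp add: matrix_vector_mult_def)
    also have "norm \<dots> \<le> (\<Sum>j\<in>UNIV. norm (A $ i $ j * v $ j))" by (rule norm_sum)
    also have "\<dots> = (\<Sum>j\<in>UNIV. norm (A $ i $ j) * norm (v $ j))" by (simp add: norm_mult)
    also have "\<dots> \<le> (\<Sum>j\<in>(UNIV::'n set). norm A * norm v)"
    proof (rule sum_mono)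
      fix j
      have "norm (A $ i $ j) \<le> norm A" using nth_le[of "A $ i" j] nth_le[of A i] by linarith
      moreover have "norm (v $ j) \<le> norm v" by (rule nth_le)
      ultimately show "norm (A $ i $ j) * norm (v $ j) \<le> norm A * norm v"
        by (simp add: mult_mono)
    qed
    finally show "norm ((A *v v) $ i) \<le> real CARD('n) * (norm A * norm v)" by simp
  qed
  finally show "norm (A *v v) \<le> real CARD('n) * real CARD('n) * norm A * norm v" by (simp add: mult.assoc)
qed


lemma opnorm_add: "opnorm ((A::'n::finite cmat) + B) \<le> opnorm A + opnorm B"
proof -
  have "(\<lambda>v. (A + B) *v v) = (\<lambda>v. A *v v + B *v v)" by (simp add: fun_eq_iff matrix_vector_mult_add_rdistrib)
  then show ?thesis unfolding opnorm_def using onorm_triangle[OF blA[of A] blA[of B]] by simp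
qed

lemma opnorm_scaleR: "opnorm ((r::real) *\<^sub>R (A::'n::finite cmat)) = \<bar>r\<bar> * opnorm A"
proof -
  have "(\<lambda>v. (r *\<^sub>R A) *v v) = (\<lambda>v. r *\<^sub>R (A *v v))" by (simp add: fun_eq_iff mat_vec_scaleR)
  then show ?thesis unfolding opnorm_def using onorm_scaleR[OF blA[of A], of r] by simp
qed

lemma opnorm_mult: "opnorm ((A::'n::finite cmat) ** B) \<le> opnorm A * opnorm B"
proof -
  have "(\<lambda>v. (A ** B) *v v) = (\<lambda>v. A *v v) \<circ> (\<lambda>v. B *v v)"
    by (simp add: fun_eq_iff matrix_vector_mul_assoc)
  then show ?thesis unfolding opnorm_def by (simp add: onorm_compose)
qed

lemma opnorm_one: "opnorm (mat 1 :: 'n::finite cmat) = 1"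
proof -
  have eq: "((*v) (mat 1 :: 'n cmat)) = (\<lambda>v. v)" by (simp add: fun_eq_iff)
  show ?thesis unfolding opnorm_def eq by (rule onorm_id)
qed

lemma opnorm_eq0: "opnorm (A::'n::finite cmat) = 0 \<longleftrightarrow> A = 0"
  unfolding opnorm_def by (simp add: onorm_eq_0 mat_eq0_iff)

instantiation sqm :: (finite) real_normed_algebra_1
begin
definition zero_sqm_def: "0 = Abs_sqm 0"
definition one_sqm_def: "1 = Abs_sqm (mat 1)"
definition plus_sqm_def: "x + y = Abs_sqm (Rep_sqm x + Rep_sqm y)"
definition minus_sqm_def: "x - y = Abs_sqm (Rep_sqm x - Rep_sqm y)"
definition uminus_sqm_def: "- x = Abs_sqm (- Rep_sqm x)"
definition times_sqm_def: "x * y = Abs_sqm (Rep_sqm x ** Rep_sqm y)"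
definition scaleR_sqm_def: "scaleR r x = Abs_sqm (r *\<^sub>R Rep_sqm x)"
definition norm_sqm_def: "norm x = opnorm (Rep_sqm x)"
definition sgn_sqm_def: "sgn (x::'a sqm) = inverse (norm x) *\<^sub>R x"
definition dist_sqm_def: "dist (x::'a sqm) y = norm (x - y)"
definition uniformity_sqm_def: "(uniformity :: ('a sqm \<times> 'a sqm) filter) = (INF e\<in>{0 <..}. principal {(x, y). dist x y < e})"
definition open_sqm_def: "open (S :: 'a sqm set) = (\<forall>x\<in>S. \<forall>\<^sub>F (x', y) in uniformity. x' = x \<longrightarrow> y \<in> S)"
instance
proof
  have R: "\<And>x. Abs_sqm (Rep_sqm x) = x" "\<And>y. Rep_sqm (Abs_sqm y) = y" by (simp_all add: Rep_sqm_inverse Abs_sqm_inverse)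
  have inj: "\<And>x y. x = y \<longleftrightarrow> Rep_sqm x = Rep_sqm y" by (simp add: Rep_sqm_inject)
  note defs = zero_sqm_def one_sqm_def plus_sqm_def minus_sqm_def uminus_sqm_def times_sqm_def scaleR_sqm_def norm_sqm_def inj R
  fix a b c :: "'a sqm" and r s :: real
  show "a * b * c = a * (b * c)" by (simp add: defs matrix_mul_assoc)
  show "1 * a = a" by (simp add: defs)
  show "a * 1 = a" by (simp add: defs)
  show "(a + b) * c = a * c + b * c" by (simp add: defs mat_add_rdistrib)
  show "a * (b + c) = a * b + a * c" by (simp add: defs matrix_add_ldistrib)
  show "(0::'a sqm) \<noteq> 1"
  proof
    assume "(0::'a sqm) = 1"
    then have h2: "(0::'a cmat) = mat 1" by (simp add: defs)
    have "(mat 1 :: 'a cmat) $ i $ i = 1" for i by (simp add: mat_def)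
    then have "(0::'a cmat) $ i $ i = 1" for i by (simp add: h2)
    then show False by simp
  qed
  show "a + b + c = a + (b + c)" by (simp add: defs add.assoc)
  show "a + b = b + a" by (simp add: defs add.commute)
  show "0 + a = a" by (simp add: defs)
  show "- a + a = 0" by (simp add: defs)
  show "a - b = a + - b" by (simp add: defs)
  show "r *\<^sub>R (a + b) = r *\<^sub>R a + r *\<^sub>R b" by (simp add: defs scaleR_add_right)
  show "(r + s) *\<^sub>R a = r *\<^sub>R a + s *\<^sub>R a" by (simp add: defs scaleR_add_left)
  show "r *\<^sub>R s *\<^sub>R a = (r * s) *\<^sub>R a" by (simp add: defs)
  show "1 *\<^sub>R a = a" by (simp add: defs)
  show "r *\<^sub>R a * b = r *\<^sub>R (a * b)" by (simp add: defs mat_scaleR_mult_left)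
  show "a * r *\<^sub>R b = r *\<^sub>R (a * b)" by (simp add: defs mat_scaleR_mult_right)
  show "norm (1::'a sqm) = 1" by (simp add: defs opnorm_one)
  show "norm (a * b) \<le> norm a * norm b" by (simp add: defs opnorm_mult)
  show "norm a = 0 \<longleftrightarrow> a = 0" by (simp add: defs opnorm_eq0)
  show "norm (a + b) \<le> norm a + norm b" by (simp add: defs opnorm_add)
  show "norm (r *\<^sub>R a) = \<bar>r\<bar> * norm a" by (simp add: defs opnorm_scaleR)
  show "sgn a = inverse (norm a) *\<^sub>R a" by (rule sgn_sqm_def)
  show "dist a b = norm (a - b)" by (rule dist_sqm_def)
  show "(uniformity :: ('a sqm \<times> 'a sqm) filter) = (INF e\<in>{0 <..}. principal {(x, y). dist x y < e})" by (rule uniformity_sqm_def)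
  fix U :: "'a sqm set"
  show "open U = (\<forall>x\<in>U. \<forall>\<^sub>F (x', y) in uniformity. x' = x \<longrightarrow> y \<in> U)" by (rule open_sqm_def)
qed
end

lemma Rep_add: "Rep_sqm (x + y) = Rep_sqm x + Rep_sqm y" by (simp add: plus_sqm_def Abs_sqm_inverse)
lemma Rep_diff: "Rep_sqm (x - y) = Rep_sqm x - Rep_sqm y" by (simp add: minus_sqm_def Abs_sqm_inverse)
lemma Rep_minus: "Rep_sqm (- x) = - Rep_sqm x" by (simp add: uminus_sqm_def Abs_sqm_inverse)
lemma Rep_mult: "Rep_sqm (x * y) = Rep_sqm x ** Rep_sqm y" by (simp add: times_sqm_def Abs_sqm_inverse)
lemma Rep_scaleR: "Rep_sqm (r *\<^sub>R x) = r *\<^sub>R Rep_sqm x" by (simp add: scaleR_sqm_def Abs_sqm_inverse)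
lemma Rep_one: "Rep_sqm 1 = mat 1" by (simp add: one_sqm_def Abs_sqm_inverse)
lemma Rep_zero: "Rep_sqm 0 = 0" by (simp add: zero_sqm_def Abs_sqm_inverse)
lemma norm_sqm: "norm x = opnorm (Rep_sqm x)" by (simp add: norm_sqm_def)

lemma bl_Rep: "bounded_linear (Rep_sqm :: 'n::finite sqm \<Rightarrow> 'n cmat)"
proof
  fix x y :: "'n sqm" and r :: real
  show "Rep_sqm (x + y) = Rep_sqm x + Rep_sqm y" by (rule Rep_add)
  show "Rep_sqm (r *\<^sub>R x) = r *\<^sub>R Rep_sqm x" by (rule Rep_scaleR)
  show "\<exists>K. \<forall>x::'n sqm. norm (Rep_sqm x) \<le> norm x * K"
    by (intro exI[of _ "real CARD('n) * real CARD('n)"] allI) (metis mult.commute norm_sqm vecnorm_le_opnorm)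
qed

lemma bl_Abs: "bounded_linear (Abs_sqm :: 'n::finite cmat \<Rightarrow> 'n sqm)"
proof
  fix x y :: "'n cmat" and r :: real
  show "Abs_sqm (x + y) = Abs_sqm x + Abs_sqm y" by (simp add: plus_sqm_def Abs_sqm_inverse)
  show "Abs_sqm (r *\<^sub>R x) = r *\<^sub>R Abs_sqm x" by (simp add: scaleR_sqm_def Abs_sqm_inverse)
  show "\<exists>K. \<forall>x::'n cmat. norm (Abs_sqm x) \<le> norm x * K"
    by (intro exI[of _ "real CARD('n) * real CARD('n)"] allI) (metis mult.commute norm_sqm Abs_sqm_inverse UNIV_I opnorm_le_vecnorm)
qed

instance sqm :: (finite) banach
proof
  fix X :: "nat \<Rightarrow> 'a sqm"
  assume "Cauchy X"
  then have "Cauchy (\<lambda>n. Rep_sqm (X n))" by (rule bounded_linear.Cauchy[OF bl_Rep])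
  then obtain L where "(\<lambda>n. Rep_sqm (X n)) \<longlonglongrightarrow> L" by (auto simp: convergent_eq_Cauchy[symmetric] convergent_def)
  then have "(\<lambda>n. Abs_sqm (Rep_sqm (X n))) \<longlonglongrightarrow> Abs_sqm L" by (rule bounded_linear.tendsto[OF bl_Abs])
  then show "convergent X" by (auto simp: convergent_def Rep_sqm_inverse)
qed

lemma Rep_power: "Rep_sqm ((Abs_sqm A) ^ k) = mpow A k"
  by (induction k) (simp_all add: mpow_def Rep_one Rep_mult Abs_sqm_inverse)

lemma mexp_exp: "mexp A = Rep_sqm (exp (Abs_sqm A))"
proof -
  have "(\<lambda>n. (Abs_sqm A) ^ n /\<^sub>R fact n) sums exp (Abs_sqm A)" by (rule exp_converges)
  then have "(\<lambda>n. Rep_sqm ((Abs_sqm A) ^ n /\<^sub>R fact n)) sums Rep_sqm (exp (Abs_sqm A))"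
    by (rule bounded_linear.sums[OF bl_Rep])
  then have "(\<lambda>n. (1 / fact n) *\<^sub>R mpow A n) sums Rep_sqm (exp (Abs_sqm A))"
    by (simp add: Rep_scaleR Rep_power divide_inverse)
  then show ?thesis unfolding mexp_def by (simp add: sums_iff)
qed

definition Ak :: "'n::finite cmat \<Rightarrow> 'n sqm" where
  "Ak H = Abs_sqm (cscale (- \<i>) H)"

lemma cscale_real_mult: "cscale (- \<i> * complex_of_real a) H = a *\<^sub>R cscale (- \<i>) H"
  by (simp add: cscale_def vec_eq_iff) (simp add: scaleR_conv_of_real)

lemma eprop_exp: "eprop a H = Rep_sqm (exp (a *\<^sub>R Ak H))"
  unfolding eprop_def mexp_exp Ak_def cscale_real_mult
  by (simp add: scaleR_sqm_def Abs_sqm_inverse)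

lemma opnorm_norm: "opnorm X = norm (Abs_sqm X)"
  by (simp add: norm_sqm Abs_sqm_inverse)

lemma opnorm_Ak: "norm (Ak H) = opnorm H"
proof -
  have "(\<lambda>v. cscale (- \<i>) H *v v) = (\<lambda>v. (- \<i>) *s (H *v v))"
    by (simp add: fun_eq_iff vec_eq_iff cscale_def matrix_vector_mult_def sum_distrib_left mult.assoc sum_negf)
  moreover have "norm ((- \<i>) *s (x::complex^'n)) = norm x" for x
    by (simp add: norm_vec_def norm_mult)
  ultimately have "\<And>v. norm (cscale (- \<i>) H *v v) = norm (H *v v)" by (metis)
  then have "onorm (\<lambda>v. cscale (- \<i>) H *v v) = onorm (\<lambda>v. H *v v)"
    by (simp add: onorm_def)
  then show ?thesis by (simp add: Ak_def norm_sqm Abs_sqm_inverse opnorm_def)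
qed

definition skew :: "'n::finite sqm \<Rightarrow> bool" where
  "skew X \<longleftrightarrow> (\<forall>v. inner (Rep_sqm X *v v) v = 0)"

lemma skew_add: "skew X \<Longrightarrow> skew Y \<Longrightarrow> skew (X + Y)"
  by (simp add: skew_def Rep_add matrix_vector_mult_add_rdistrib inner_add_left)

lemma skew_scaleR: "skew X \<Longrightarrow> skew (r *\<^sub>R X)"
  by (simp add: skew_def Rep_scaleR mat_vec_scaleR)

lemma skew_minus: "skew X \<Longrightarrow> skew (- X)"
  using skew_scaleR[of X "-1"] by simp

lemma herm_skew: fixes H :: "'n::finite cmat" assumes "hermitian H" shows "skew (Ak H)"
  unfolding skew_def
proof
  fix v :: "complex^'n"
  have hc: "cnj (H $ i $ j) = H $ j $ i" for i j using assms unfolding hermitian_def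
    by (metis complex_cnj_cnj)
  define S where "S = (\<Sum>i\<in>UNIV. \<Sum>j\<in>UNIV. H $ i $ j * v $ j * cnj (v $ i))"
  have "cnj S = (\<Sum>i\<in>UNIV. \<Sum>j\<in>UNIV. cnj (H $ i $ j) * cnj (v $ j) * v $ i)"
    by (simp add: S_def cnj_sum)
  also have "\<dots> = (\<Sum>i\<in>UNIV. \<Sum>j\<in>UNIV. H $ j $ i * cnj (v $ j) * v $ i)"
    by (simp only: hc)
  also have "\<dots> = (\<Sum>j\<in>UNIV. \<Sum>i\<in>UNIV. H $ j $ i * cnj (v $ j) * v $ i)"
    by (rule sum.swap)
  also have "\<dots> = S" unfolding S_def by (simp add: mult_ac)
  finally have "cnj S = S" .
  then have imS: "Im S = 0" by (metis cnj.simps(2) neg_equal_zero)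
  have "inner (Rep_sqm (Ak H) *v v) v = (\<Sum>i\<in>UNIV. inner ((\<Sum>j\<in>UNIV. - \<i> * H $ i $ j * v $ j)) (v $ i))"
    by (simp add: Ak_def Abs_sqm_inverse inner_vec_def matrix_vector_mult_def cscale_def)
  also have "\<dots> = (\<Sum>i\<in>UNIV. Re ((\<Sum>j\<in>UNIV. - \<i> * H $ i $ j * v $ j) * cnj (v $ i)))"
    by (simp only: complex_inner_1_right inner_complex_def) (simp add: algebra_simps)
  also have "\<dots> = Re (- \<i> * S)"
    by (simp add: S_def sum_distrib_left sum_distrib_right Re_sum mult_ac)
  also have "\<dots> = 0" using imS by simp
  finally show "inner (Rep_sqm (Ak H) *v v) v = 0" .
qed

lemma bl_app: "bounded_linear (\<lambda>M::'n::finite sqm. Rep_sqm M *v v)"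
proof
  fix x y :: "'n sqm" and r :: real
  show "Rep_sqm (x + y) *v v = Rep_sqm x *v v + Rep_sqm y *v v" by (simp add: Rep_add matrix_vector_mult_add_rdistrib)
  show "Rep_sqm (r *\<^sub>R x) *v v = r *\<^sub>R (Rep_sqm x *v v)" by (simp add: Rep_scaleR mat_vec_scaleR)
  show "\<exists>K. \<forall>x::'n sqm. norm (Rep_sqm x *v v) \<le> norm x * K"
    by (intro exI[of _ "norm v"] allI) (simp add: norm_sqm opnorm_vec)
qed

lemma norm_app: "norm (Rep_sqm M *v v) \<le> norm M * norm v"
  by (simp add: norm_sqm opnorm_vec)

lemma exp_skew_le1:
  fixes X :: "'n::finite sqm"
  assumes "skew X" shows "norm (exp X) \<le> 1"
proof -
  have "norm (Rep_sqm (exp X) *v v) \<le> 1 * norm v" for v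
  proof -
    define y where "y s = Rep_sqm (exp (s *\<^sub>R X)) *v v" for s
    have dy: "(y has_vector_derivative Rep_sqm X *v y s) (at s)" for s
    proof -
      have "((\<lambda>s. Rep_sqm (exp (s *\<^sub>R X)) *v v) has_vector_derivative Rep_sqm (X * exp (s *\<^sub>R X)) *v v) (at s)"
        by (rule bounded_linear.has_vector_derivative[OF bl_app exp_scaleR_has_vector_derivative_left])
      then show ?thesis unfolding y_def by (simp add: Rep_mult matrix_vector_mul_assoc)
    qed
    have "((\<lambda>s. inner (y s) (y s)) has_real_derivative 0) (at s)" for s
    proof -
      have "((\<lambda>s. inner (y s) (y s)) has_vector_derivative
          (inner (y s) (Rep_sqm X *v y s) + inner (Rep_sqm X *v y s) (y s))) (at s)"
        by (rule bounded_bilinear.has_vector_derivative[OF bounded_bilinear_inner dy dy])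
      moreover have "inner (Rep_sqm X *v y s) (y s) = 0" using assms by (simp add: skew_def)
      ultimately show ?thesis by (simp add: inner_commute has_real_derivative_iff_has_vector_derivative)
    qed
    then have "inner (y 1) (y 1) = inner (y 0) (y 0)" by (metis DERIV_isconst_all)
    then have "norm (y 1) = norm (y 0)" by (simp add: norm_eq_sqrt_inner)
    then show ?thesis by (simp add: y_def Rep_one)
  qed
  then show ?thesis by (simp add: norm_sqm opnorm_le)
qed

lemma bnd:
  fixes F :: "real \<Rightarrow> 'a::banach"
  assumes "x \<le> y"
    and "\<And>t. t \<in> {x..y} \<Longrightarrow> (F has_vector_derivative F' t) (at t within {x..y})"
    and "\<And>t. t \<in> {x..y} \<Longrightarrow> (g has_real_derivative g' t) (at t within {x..y})"
    and "\<And>t. t \<in> {x..y} \<Longrightarrow> norm (F' t) \<le> g' t"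
  shows "norm (F y - F x) \<le> g y - g x"
proof -
  have i1: "(F' has_integral F y - F x) {x..y}"
    by (rule fundamental_theorem_of_calculus[OF assms(1) assms(2)])
  have i2: "(g' has_integral g y - g x) {x..y}"
    by (rule fundamental_theorem_of_calculus[OF assms(1)])
      (use assms(3) in \<open>simp add: has_real_derivative_iff_has_vector_derivative\<close>)
  have "norm (integral {x..y} F') \<le> integral {x..y} g'"
    by (rule integral_norm_bound_integral) (use i1 i2 assms(4) in auto)
  then show ?thesis using i1 i2 by (simp add: integral_unique)
qed

definition Ad :: "'n::finite sqm \<Rightarrow> real \<Rightarrow> 'n sqm \<Rightarrow> 'n sqm" where
  "Ad X s Y = exp (s *\<^sub>R X) * Y * exp (- (s *\<^sub>R X))"

definition cm :: "'n::finite sqm \<Rightarrow> 'n sqm \<Rightarrow> 'n sqm" where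
  "cm X Y = X * Y - Y * X"

lemma exp_inv1: "exp (s *\<^sub>R X) * exp (- (s *\<^sub>R X)) = 1"
  by (rule exp_minus_inverse)
lemma exp_inv2: "exp (- (s *\<^sub>R X)) * exp (s *\<^sub>R X) = 1"
  using exp_minus_inverse[of "- (s *\<^sub>R X)"] by simp

lemma exp_comm: "exp (s *\<^sub>R X) * X = X * exp (s *\<^sub>R X)"
  by (rule exp_times_scaleR_commute)

lemma Ad_0[simp]: "Ad X 0 Y = Y" by (simp add: Ad_def)

lemma Ad_self: "Ad X s X = X"
proof -
  have "exp (s *\<^sub>R X) * X * exp (- (s *\<^sub>R X)) = X * (exp (s *\<^sub>R X) * exp (- (s *\<^sub>R X)))"
    by (simp only: exp_comm mult.assoc)
  then show ?thesis by (simp only: Ad_def exp_inv1 mult_1_right)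
qed

lemma Ad_mult_exp: "Ad X s Y * exp (s *\<^sub>R X) = exp (s *\<^sub>R X) * Y"
proof -
  have "exp (s *\<^sub>R X) * Y * exp (- (s *\<^sub>R X)) * exp (s *\<^sub>R X) = exp (s *\<^sub>R X) * Y * (exp (- (s *\<^sub>R X)) * exp (s *\<^sub>R X))"
    by (simp only: mult.assoc)
  then show ?thesis by (simp only: Ad_def exp_inv2 mult_1_right)
qed

lemma Ad_add: "Ad X s (Y + Z) = Ad X s Y + Ad X s Z" by (simp add: Ad_def algebra_simps)
lemma Ad_diff: "Ad X s (Y - Z) = Ad X s Y - Ad X s Z" by (simp add: Ad_def algebra_simps)
lemma Ad_scaleR: "Ad X s (r *\<^sub>R Y) = r *\<^sub>R Ad X s Y" by (simp add: Ad_def)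
lemma Ad_neg: "Ad X s Y = Ad (- X) (- s) Y" by (simp add: Ad_def)

lemma Ad_norm: assumes "skew X" shows "norm (Ad X s Y) \<le> norm Y"
proof -
  have a: "norm (exp (s *\<^sub>R X)) \<le> 1" by (rule exp_skew_le1[OF skew_scaleR[OF assms]])
  have b: "norm (exp (- (s *\<^sub>R X))) \<le> 1" using exp_skew_le1[OF skew_scaleR[OF skew_minus[OF assms]], of s] by simp
  have "norm (Ad X s Y) \<le> norm (exp (s *\<^sub>R X) * Y) * norm (exp (- (s *\<^sub>R X)))"
    unfolding Ad_def by (rule norm_mult_ineq)
  also have "\<dots> \<le> norm (exp (s *\<^sub>R X) * Y)" using b by (simp add: mult_left_le)
  also have "\<dots> \<le> norm (exp (s *\<^sub>R X)) * norm Y" by (rule norm_mult_ineq)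
  also have "\<dots> \<le> norm Y" using a by (simp add: mult_left_le_one_le)
  finally show ?thesis .
qed

lemma Ad_deriv: "((\<lambda>s. Ad X s Y) has_vector_derivative Ad X s (cm X Y)) (at s within S)"
proof -
  have d1: "((\<lambda>s. exp (s *\<^sub>R X)) has_vector_derivative exp (s *\<^sub>R X) * X) (at s within S)"
    by (rule exp_scaleR_has_vector_derivative_right)
  have d2: "((\<lambda>s. exp (s *\<^sub>R (- X))) has_vector_derivative exp (s *\<^sub>R (- X)) * (- X)) (at s within S)"
    by (rule exp_scaleR_has_vector_derivative_right)
  have "((\<lambda>s. exp (s *\<^sub>R X) * Y * exp (s *\<^sub>R (- X))) has_vector_derivative
     exp (s *\<^sub>R X) * Y * (exp (s *\<^sub>R (- X)) * (- X)) + (exp (s *\<^sub>R X) * X) * Y * exp (s *\<^sub>R (- X))) (at s within S)"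
    by (intro has_vector_derivative_mult d2 has_vector_derivative_mult_left d1)
  moreover have "exp (s *\<^sub>R X) * Y * (exp (s *\<^sub>R (- X)) * (- X)) + (exp (s *\<^sub>R X) * X) * Y * exp (s *\<^sub>R (- X))
      = Ad X s (cm X Y)"
  proof -
    have c: "exp (s *\<^sub>R (- X)) * (- X) = - (X * exp (- (s *\<^sub>R X)))"
      using exp_comm[of s "- X"] by simp
    have "exp (s *\<^sub>R X) * Y * (exp (s *\<^sub>R (- X)) * (- X)) + (exp (s *\<^sub>R X) * X) * Y * exp (s *\<^sub>R (- X))
       = exp (s *\<^sub>R X) * Y * (- (X * exp (- (s *\<^sub>R X)))) + (exp (s *\<^sub>R X) * X) * Y * exp (- (s *\<^sub>R X))"
      by (simp only: c) simp
    also have "\<dots> = Ad X s (cm X Y)"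
      unfolding Ad_def cm_def by (simp add: algebra_simps)
    finally show ?thesis .
  qed
  ultimately show ?thesis unfolding Ad_def by simp
qed

lemma F3_pos:
  assumes "skew X" "0 \<le> s"
  shows "norm (Ad X s Y - Y) \<le> s * norm (cm X Y)"
proof -
  have "norm (Ad X s Y - Ad X 0 Y) \<le> norm (cm X Y) * s - norm (cm X Y) * 0"
    by (rule bnd[where F'="\<lambda>t. Ad X t (cm X Y)" and g'="\<lambda>t. norm (cm X Y)"])
      (auto intro!: Ad_deriv derivative_eq_intros Ad_norm assms)
  then show ?thesis by (simp add: mult.commute)
qed

lemma cm_neg: "cm (- X) Y = - cm X Y" by (simp add: cm_def)
lemma cm_neg_right: "cm X (- Y) = - cm X Y" by (simp add: cm_def)

lemma F3:
  assumes "skew X"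
  shows "norm (Ad X s Y - Y) \<le> \<bar>s\<bar> * norm (cm X Y)"
proof (cases "0 \<le> s")
  case True then show ?thesis using F3_pos[OF assms True] by simp
next
  case False
  have "norm (Ad (- X) (- s) Y - Y) \<le> (- s) * norm (cm (- X) Y)"
    by (rule F3_pos) (use False skew_minus[OF assms] in auto)
  then show ?thesis using False by (simp add: Ad_neg[of X s] cm_neg cm_neg_right)
qed

lemma F4_pos:
  assumes "skew X" "0 \<le> s"
  shows "norm (Ad X s Y - Y - s *\<^sub>R cm X Y) \<le> s\<^sup>2 / 2 * norm (cm X (cm X Y))"
proof -
  let ?F = "\<lambda>t. Ad X t Y - t *\<^sub>R cm X Y"
  have "norm (?F s - ?F 0) \<le> norm (cm X (cm X Y)) * s\<^sup>2 / 2 - norm (cm X (cm X Y)) * 0\<^sup>2 / 2"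
  proof (rule bnd[where F'="\<lambda>t. Ad X t (cm X Y) - cm X Y" and g'="\<lambda>t. norm (cm X (cm X Y)) * t"])
    fix t assume t: "t \<in> {0..s}"
    show "(?F has_vector_derivative Ad X t (cm X Y) - cm X Y) (at t within {0..s})"
      by (auto intro!: Ad_deriv derivative_eq_intros)
    show "((\<lambda>t. norm (cm X (cm X Y)) * t\<^sup>2 / 2) has_real_derivative norm (cm X (cm X Y)) * t) (at t within {0..s})"
      by (auto intro!: derivative_eq_intros)
    show "norm (Ad X t (cm X Y) - cm X Y) \<le> norm (cm X (cm X Y)) * t"
      using F3[OF assms(1), of t "cm X Y"] t by (simp add: mult.commute)
  qed (use assms in auto)
  moreover have "?F s - ?F 0 = Ad X s Y - Y - s *\<^sub>R cm X Y" by simp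
  ultimately have "norm (Ad X s Y - Y - s *\<^sub>R cm X Y) \<le> norm (cm X (cm X Y)) * s\<^sup>2 / 2 - norm (cm X (cm X Y)) * 0\<^sup>2 / 2" by metis
  then show ?thesis by (simp add: mult.commute)
qed

lemma F4:
  assumes "skew X"
  shows "norm (Ad X s Y - Y - s *\<^sub>R cm X Y) \<le> s\<^sup>2 / 2 * norm (cm X (cm X Y))"
proof (cases "0 \<le> s")
  case True then show ?thesis using F4_pos[OF assms True] by simp
next
  case False
  have "norm (Ad (- X) (- s) Y - Y - (- s) *\<^sub>R cm (- X) Y) \<le> (- s)\<^sup>2 / 2 * norm (cm (- X) (cm (- X) Y))"
    by (rule F4_pos) (use False skew_minus[OF assms] in auto)
  then show ?thesis using False by (simp add: Ad_neg[of X s] cm_neg cm_neg_right)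
qed

lemma F4'_pos:
  assumes "skew X" "0 \<le> s"
  shows "norm (Ad X s Y - Y - s *\<^sub>R Ad X s (cm X Y)) \<le> s\<^sup>2 / 2 * norm (cm X (cm X Y))"
proof -
  let ?F = "\<lambda>t. Ad X t Y - t *\<^sub>R Ad X t (cm X Y)"
  have "norm (?F s - ?F 0) \<le> norm (cm X (cm X Y)) * s\<^sup>2 / 2 - norm (cm X (cm X Y)) * 0\<^sup>2 / 2"
  proof (rule bnd[where F'="\<lambda>t. - (t *\<^sub>R Ad X t (cm X (cm X Y)))" and g'="\<lambda>t. norm (cm X (cm X Y)) * t"])
    fix t assume t: "t \<in> {0..s}"
    have "(?F has_vector_derivative Ad X t (cm X Y) - (t *\<^sub>R Ad X t (cm X (cm X Y)) + 1 *\<^sub>R Ad X t (cm X Y))) (at t within {0..s})"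
      by (intro Ad_deriv derivative_intros)
    then show "(?F has_vector_derivative - (t *\<^sub>R Ad X t (cm X (cm X Y)))) (at t within {0..s})"
      by simp
    show "((\<lambda>t. norm (cm X (cm X Y)) * t\<^sup>2 / 2) has_real_derivative norm (cm X (cm X Y)) * t) (at t within {0..s})"
      by (auto intro!: derivative_eq_intros)
    show "norm (- (t *\<^sub>R Ad X t (cm X (cm X Y)))) \<le> norm (cm X (cm X Y)) * t"
      using Ad_norm[OF assms(1), of t "cm X (cm X Y)"] t by (simp add: mult.commute mult_left_mono)
  qed (use assms in auto)
  moreover have "?F s - ?F 0 = Ad X s Y - Y - s *\<^sub>R Ad X s (cm X Y)" by simp
  ultimately have "norm (Ad X s Y - Y - s *\<^sub>R Ad X s (cm X Y)) \<le> norm (cm X (cm X Y)) * s\<^sup>2 / 2 - norm (cm X (cm X Y)) * 0\<^sup>2 / 2" by metis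
  then show ?thesis by (simp add: mult.commute)
qed

lemma F4':
  assumes "skew X"
  shows "norm (Ad X s Y - Y - s *\<^sub>R Ad X s (cm X Y)) \<le> s\<^sup>2 / 2 * norm (cm X (cm X Y))"
proof (cases "0 \<le> s")
  case True then show ?thesis using F4'_pos[OF assms True] by simp
next
  case False
  have "norm (Ad (- X) (- s) Y - Y - (- s) *\<^sub>R Ad (- X) (- s) (cm (- X) Y)) \<le> (- s)\<^sup>2 / 2 * norm (cm (- X) (cm (- X) Y))"
    by (rule F4'_pos) (use False skew_minus[OF assms] in auto)
  then show ?thesis using False by (simp add: Ad_neg[of X s] cm_neg cm_neg_right Ad_scaleR[of _ _ "-1", simplified])
qed

lemma duhamel:
  fixes U V E L :: "real \<Rightarrow> 'n::finite sqm"
  assumes h: "0 \<le> h"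
    and dU: "\<And>t. t \<in> {0..h} \<Longrightarrow> (U has_vector_derivative L t * U t) (at t within {0..h})"
    and dV: "\<And>t. t \<in> {0..h} \<Longrightarrow> (V has_vector_derivative L t * V t + E t) (at t within {0..h})"
    and sk: "\<And>t. t \<in> {0..h} \<Longrightarrow> skew (L t)"
    and init: "V 0 = U 0"
    and dg: "\<And>t. t \<in> {0..h} \<Longrightarrow> (g has_real_derivative g' t) (at t within {0..h})"
    and bE: "\<And>t. t \<in> {0..h} \<Longrightarrow> norm (E t) \<le> g' t"
  shows "norm (V h - U h) \<le> g h - g 0"
proof -
  have "norm (Rep_sqm (V h - U h) *v v) \<le> (g h - g 0) * norm v" for v
  proof -
    define y where "y t = Rep_sqm (V t - U t) *v v" for t
    define y' where "y' t = Rep_sqm (L t) *v y t + Rep_sqm (E t) *v v" for t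
    have dy: "(y has_vector_derivative y' t) (at t within {0..h})" if t: "t \<in> {0..h}" for t
    proof -
      have "((\<lambda>t. V t - U t) has_vector_derivative (L t * V t + E t) - L t * U t) (at t within {0..h})"
        by (rule has_vector_derivative_diff[OF dV[OF t] dU[OF t]])
      from bounded_linear.has_vector_derivative[OF bl_app this, of v]
      show ?thesis unfolding y_def y'_def
        by (simp add: Rep_add Rep_diff Rep_mult algebra_simps matrix_vector_mult_add_rdistrib
            matrix_vector_mult_diff_rdistrib matrix_vector_mul_assoc)
    qed
    have y0: "y 0 = 0" by (simp add: y_def init Rep_zero)
    have key: "norm (y h) \<le> (g h - g 0) * norm v + e" if e: "0 < e" for e
    proof -
      define q where "q t = inner (y t) (y t) + e\<^sup>2" for t
      define \<psi> where "\<psi> t = sqrt (q t) - (g t - g 0) * norm v" for t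
      have qpos: "0 < q t" for t unfolding q_def using e by (simp add: add_nonneg_pos)
      define \<psi>' where "\<psi>' t = inverse (sqrt (q t)) / 2 * (2 * inner (y t) (y' t)) - g' t * norm v" for t
      have d\<psi>: "(\<psi> has_real_derivative \<psi>' t) (at t within {0..h})" if t: "t \<in> {0..h}" for t
      proof -
        have "((\<lambda>t. inner (y t) (y t)) has_vector_derivative inner (y t) (y' t) + inner (y' t) (y t)) (at t within {0..h})"
          by (rule bounded_bilinear.has_vector_derivative[OF bounded_bilinear_inner dy[OF t] dy[OF t]])
        then have "(q has_real_derivative 2 * inner (y t) (y' t)) (at t within {0..h})"
          unfolding q_def has_real_derivative_iff_has_vector_derivative[symmetric]
          by (auto intro!: derivative_eq_intros simp: inner_commute)
        from DERIV_chain2[OF DERIV_real_sqrt[OF qpos[of t]] this]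
        have "((\<lambda>t. sqrt (q t)) has_real_derivative inverse (sqrt (q t)) / 2 * (2 * inner (y t) (y' t))) (at t within {0..h})" .
        moreover have "((\<lambda>t. (g t - g 0) * norm v) has_real_derivative g' t * norm v) (at t within {0..h})"
          by (auto intro!: derivative_eq_intros dg t)
        ultimately show ?thesis unfolding \<psi>_def \<psi>'_def by (rule DERIV_diff)
      qed
      have neg: "\<psi>' t \<le> 0" if t: "t \<in> {0..h}" for t
      proof -
        have "inner (y t) (y' t) = inner (y t) (Rep_sqm (E t) *v v)"
          using sk[OF t] by (simp add: y'_def inner_add_right skew_def inner_commute)
        also have "\<dots> \<le> norm (y t) * norm (Rep_sqm (E t) *v v)" by (rule norm_cauchy_schwarz)
        also have "\<dots> \<le> norm (y t) * (g' t * norm v)"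
          by (rule mult_left_mono) (use norm_app[of "E t" v] bE[OF t] in \<open>auto intro: order_trans[OF _ mult_right_mono]\<close>)
        also have "\<dots> \<le> sqrt (q t) * (g' t * norm v)"
        proof (rule mult_right_mono)
          show "norm (y t) \<le> sqrt (q t)" unfolding q_def norm_eq_sqrt_inner by simp
          have "0 \<le> g' t" using bE[OF t] norm_ge_zero[of "E t"] by linarith
          then show "0 \<le> g' t * norm v" by simp
        qed
        finally have "inner (y t) (y' t) \<le> sqrt (q t) * (g' t * norm v)" .
        then have "inverse (sqrt (q t)) * inner (y t) (y' t) \<le> g' t * norm v"
          using qpos[of t] by (simp add: field_simps)
        then show ?thesis unfolding \<psi>'_def by simp
      qed
      obtain x where x: "x \<in> {0..h}" "\<psi> h - \<psi> 0 = \<psi>' x * (h - 0)"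
        using mvt_very_simple[OF h, of \<psi> "\<lambda>t d. \<psi>' t * d"] d\<psi>
        by (auto simp: has_field_derivative_def)
      have "\<psi>' x * h \<le> 0" using neg[OF x(1)] h by (simp add: mult_nonpos_nonneg)
      then have "\<psi> h \<le> \<psi> 0" using x by simp
      moreover have "\<psi> 0 = e" using e by (simp add: \<psi>_def q_def y0)
      moreover have "norm (y h) \<le> sqrt (q h)" unfolding q_def norm_eq_sqrt_inner by simp
      ultimately show ?thesis unfolding \<psi>_def by simp
    qed
    show ?thesis using key by (simp add: y_def field_le_epsilon)
  qed
  then show ?thesis by (simp add: norm_sqm opnorm_le)
qed

lemma exp_chain:
  assumes "(f has_real_derivative f') (at t within S)"
  shows "((\<lambda>t. exp (f t *\<^sub>R X)) has_vector_derivative f' *\<^sub>R (X * exp (f t *\<^sub>R X))) (at t within S)"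
proof -
  have "(f has_vector_derivative f') (at t within S)"
    using assms by (simp add: has_real_derivative_iff_has_vector_derivative)
  moreover have "((\<lambda>s. exp (s *\<^sub>R X)) has_vector_derivative X * exp (f t *\<^sub>R X)) (at (f t) within f ` S)"
    by (rule has_vector_derivative_at_within[OF exp_scaleR_has_vector_derivative_left])
  ultimately show ?thesis using vector_diff_chain_within[of f f' t S "\<lambda>s. exp (s *\<^sub>R X)"]
    by (simp add: o_def)
qed

lemma exp_Y_Z: "exp (s *\<^sub>R X) * (Y * Z) = Ad X s Y * (exp (s *\<^sub>R X) * Z)"
  by (metis Ad_mult_exp mult.assoc)

lemma exp_le1: "skew X \<Longrightarrow> norm (exp (s *\<^sub>R X)) \<le> 1"
  by (rule exp_skew_le1[OF skew_scaleR])

lemma nmr: "skew X \<Longrightarrow> norm (Y * exp (s *\<^sub>R X)) \<le> norm Y"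
  using norm_mult_ineq[of Y "exp (s *\<^sub>R X)"] exp_le1[of X s] norm_ge_zero[of Y]
  by (metis mult_left_le order_trans)

lemma nml: "skew X \<Longrightarrow> norm (exp (s *\<^sub>R X) * Y) \<le> norm Y"
  using norm_mult_ineq[of "exp (s *\<^sub>R X)" Y] exp_le1[of X s] norm_ge_zero[of Y]
  by (metis mult_le_cancel_right1 order_trans mult.commute mult_left_le)

definition ig :: "(real \<Rightarrow> real) \<Rightarrow> real \<Rightarrow> real" where "ig f t = integral {0..t} f"

lemma cm_swap: "norm (cm B A) = norm (cm A B)"
  by (metis cm_def minus_diff_eq norm_minus_cancel)

context
  fixes A B :: "'n::finite sqm" and a b a' b' a'' b'' :: "real \<Rightarrow> real"
    and T h a0 a1 a2 b0 b1 b2 :: real and U :: "real \<Rightarrow> 'n sqm"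
  assumes skA: "skew A" and skB: "skew B"
    and da: "\<And>t. t \<in> {0..T} \<Longrightarrow> (a has_real_derivative a' t) (at t within {0..T})"
    and dda: "\<And>t. t \<in> {0..T} \<Longrightarrow> (a' has_real_derivative a'' t) (at t within {0..T})"
    and db: "\<And>t. t \<in> {0..T} \<Longrightarrow> (b has_real_derivative b' t) (at t within {0..T})"
    and ddb: "\<And>t. t \<in> {0..T} \<Longrightarrow> (b' has_real_derivative b'' t) (at t within {0..T})"
    and ha0: "\<And>t. t \<in> {0..T} \<Longrightarrow> \<bar>a t\<bar> \<le> a0"
    and ha1: "\<And>t. t \<in> {0..T} \<Longrightarrow> \<bar>a' t\<bar> \<le> a1"
    and ha2: "\<And>t. t \<in> {0..T} \<Longrightarrow> \<bar>a'' t\<bar> \<le> a2"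
    and hb0: "\<And>t. t \<in> {0..T} \<Longrightarrow> \<bar>b t\<bar> \<le> b0"
    and hb1: "\<And>t. t \<in> {0..T} \<Longrightarrow> \<bar>b' t\<bar> \<le> b1"
    and hb2: "\<And>t. t \<in> {0..T} \<Longrightarrow> \<bar>b'' t\<bar> \<le> b2"
    and hh: "0 < h" "h \<le> T"
    and U0: "U 0 = 1"
    and dU: "\<And>t. t \<in> {0..T} \<Longrightarrow> (U has_vector_derivative (a t *\<^sub>R A + b t *\<^sub>R B) * U t) (at t within {0..T})"
begin

lemma sub: "t \<in> {0..h} \<Longrightarrow> t \<in> {0..T}" using hh by auto
lemma subs: "{0..h} \<subseteq> {0..T}" using hh by auto

lemma a0nn: "0 \<le> a0" using ha0[of 0] hh by auto
lemma b0nn: "0 \<le> b0" using hb0[of 0] hh by auto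
lemma a1nn: "0 \<le> a1" using ha1[of 0] hh by auto
lemma b1nn: "0 \<le> b1" using hb1[of 0] hh by auto

lemma dah: "t \<in> {0..h} \<Longrightarrow> (a has_real_derivative a' t) (at t within {0..h})"
  by (rule DERIV_subset[OF da[OF sub] subs])
lemma dbh: "t \<in> {0..h} \<Longrightarrow> (b has_real_derivative b' t) (at t within {0..h})"
  by (rule DERIV_subset[OF db[OF sub] subs])
lemma ddah: "t \<in> {0..h} \<Longrightarrow> (a' has_real_derivative a'' t) (at t within {0..h})"
  by (rule DERIV_subset[OF dda[OF sub] subs])
lemma ddbh: "t \<in> {0..h} \<Longrightarrow> (b' has_real_derivative b'' t) (at t within {0..h})"
  by (rule DERIV_subset[OF ddb[OF sub] subs])

lemma ca: "continuous_on {0..h} a" by (rule DERIV_continuous_on[OF dah])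
lemma cb: "continuous_on {0..h} b" by (rule DERIV_continuous_on[OF dbh])

abbreviation "\<alpha> \<equiv> ig a"
abbreviation "\<beta> \<equiv> ig b"

lemma d\<alpha>: "t \<in> {0..h} \<Longrightarrow> (\<alpha> has_real_derivative a t) (at t within {0..h})"
  unfolding ig_def has_real_derivative_iff_has_vector_derivative
  by (rule integral_has_vector_derivative[OF ca])
lemma d\<beta>: "t \<in> {0..h} \<Longrightarrow> (\<beta> has_real_derivative b t) (at t within {0..h})"
  unfolding ig_def has_real_derivative_iff_has_vector_derivative
  by (rule integral_has_vector_derivative[OF cb])

lemma \<alpha>0: "\<alpha> 0 = 0" by (simp add: ig_def)
lemma \<beta>0: "\<beta> 0 = 0" by (simp add: ig_def)

lemma \<alpha>_bound: assumes "t \<in> {0..h}" shows "\<bar>\<alpha> t\<bar> \<le> a0 * t"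
proof -
  have "norm (\<alpha> t - \<alpha> 0) \<le> a0 * t - a0 * 0"
    by (rule bnd[where F'=a and g'="\<lambda>_. a0"])
      (use assms in \<open>auto intro!: derivative_eq_intros DERIV_subset[OF d\<alpha>] ha0 sub simp: has_real_derivative_iff_has_vector_derivative[symmetric]\<close>)
  then show ?thesis by (simp add: \<alpha>0)
qed

lemma \<beta>_bound: assumes "t \<in> {0..h}" shows "\<bar>\<beta> t\<bar> \<le> b0 * t"
proof -
  have "norm (\<beta> t - \<beta> 0) \<le> b0 * t - b0 * 0"
    by (rule bnd[where F'=b and g'="\<lambda>_. b0"])
      (use assms in \<open>auto intro!: derivative_eq_intros DERIV_subset[OF d\<beta>] hb0 sub simp: has_real_derivative_iff_has_vector_derivative[symmetric]\<close>)
  then show ?thesis by (simp add: \<beta>0)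
qed

definition "L t = a t *\<^sub>R A + b t *\<^sub>R B"

lemma skL: "skew (L t)" unfolding L_def by (intro skew_add skew_scaleR skA skB)

lemma dUh: "t \<in> {0..h} \<Longrightarrow> (U has_vector_derivative L t * U t) (at t within {0..h})"
  unfolding L_def by (rule has_vector_derivative_within_subset[OF dU[OF sub] subs])

lemma case2:
  "norm (exp (\<beta> h *\<^sub>R B) * exp (\<alpha> h *\<^sub>R A) - U h) \<le> (1/2 * a0 * b0 * norm (cm A B)) * h\<^sup>2"
proof -
  define V where "V t = exp (\<beta> t *\<^sub>R B) * exp (\<alpha> t *\<^sub>R A)" for t
  define V' where "V' t = exp (\<beta> t *\<^sub>R B) * (a t *\<^sub>R (A * exp (\<alpha> t *\<^sub>R A)))
      + (b t *\<^sub>R (B * exp (\<beta> t *\<^sub>R B))) * exp (\<alpha> t *\<^sub>R A)" for t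
  define c where "c = a0 * b0 * norm (cm A B)"
  have "norm (V h - U h) \<le> c * h\<^sup>2 / 2 - c * 0\<^sup>2 / 2"
  proof (rule duhamel[where L=L and E="\<lambda>t. V' t - L t * V t" and g'="\<lambda>t. c * t"])
    show "0 \<le> h" using hh by simp
    show "V 0 = U 0" by (simp add: V_def \<alpha>0 \<beta>0 U0)
    fix t assume t: "t \<in> {0..h}"
    show "(U has_vector_derivative L t * U t) (at t within {0..h})" by (rule dUh[OF t])
    show "skew (L t)" by (rule skL)
    show "((\<lambda>t. c * t\<^sup>2 / 2) has_real_derivative c * t) (at t within {0..h})"
      by (auto intro!: derivative_eq_intros)
    have "(V has_vector_derivative V' t) (at t within {0..h})"
      unfolding V_def V'_def
      by (intro has_vector_derivative_mult exp_chain d\<alpha>[OF t] d\<beta>[OF t])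
    then show "(V has_vector_derivative L t * V t + (V' t - L t * V t)) (at t within {0..h})" by simp
    have e: "V' t - L t * V t = a t *\<^sub>R ((Ad B (\<beta> t) A - A) * exp (\<beta> t *\<^sub>R B) * exp (\<alpha> t *\<^sub>R A))"
    proof -
      show ?thesis unfolding V'_def L_def V_def
        by (simp add: algebra_simps exp_Y_Z[of _ B])
    qed
    have "norm (V' t - L t * V t) = \<bar>a t\<bar> * norm ((Ad B (\<beta> t) A - A) * exp (\<beta> t *\<^sub>R B) * exp (\<alpha> t *\<^sub>R A))"
      by (simp add: e)
    also have "\<dots> \<le> \<bar>a t\<bar> * norm (Ad B (\<beta> t) A - A)"
      by (rule mult_left_mono[OF order_trans[OF nmr[OF skA] nmr[OF skB]]]) simp
    also have "\<dots> \<le> a0 * (\<bar>\<beta> t\<bar> * norm (cm B A))"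
      by (rule mult_mono) (use ha0[OF sub[OF t]] F3[OF skB] a0nn in auto)
    also have "\<dots> \<le> a0 * (b0 * t * norm (cm A B))"
      by (rule mult_left_mono) (use \<beta>_bound[OF t] a0nn cm_swap[of B A] in \<open>auto intro: mult_right_mono\<close>)
    finally show "norm (V' t - L t * V t) \<le> c * t" by (simp add: c_def mult_ac)
  qed
  then show ?thesis by (simp add: V_def c_def)
qed


lemma nQR: "norm (X * exp (s1 *\<^sub>R B) * exp (s2 *\<^sub>R A)) \<le> norm X"
  by (rule order_trans[OF nmr[OF skA] nmr[OF skB]])

lemma case1:
  "norm (exp ((b h * h) *\<^sub>R B) * exp ((a h * h) *\<^sub>R A) - U h)
     \<le> (a1 * norm A + b1 * norm B + a0 * b0 * norm (cm A B)) * h\<^sup>2 / 2"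
proof -
  define p where "p t = a t * t" for t
  define q where "q t = b t * t" for t
  define V where "V t = exp (q t *\<^sub>R B) * exp (p t *\<^sub>R A)" for t
  define V' where "V' t = exp (q t *\<^sub>R B) * ((a t + t * a' t) *\<^sub>R (A * exp (p t *\<^sub>R A)))
      + ((b t + t * b' t) *\<^sub>R (B * exp (q t *\<^sub>R B))) * exp (p t *\<^sub>R A)" for t
  define c where "c = a1 * norm A + b1 * norm B + a0 * b0 * norm (cm A B)"
  have "norm (V h - U h) \<le> c * h\<^sup>2 / 2 - c * 0\<^sup>2 / 2"
  proof (rule duhamel[where L=L and E="\<lambda>t. V' t - L t * V t" and g'="\<lambda>t. c * t"])
    show "0 \<le> h" using hh by simp
    show "V 0 = U 0" by (simp add: V_def p_def q_def U0)
    fix t assume t: "t \<in> {0..h}"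
    show "(U has_vector_derivative L t * U t) (at t within {0..h})" by (rule dUh[OF t])
    show "skew (L t)" by (rule skL)
    show "((\<lambda>t. c * t\<^sup>2 / 2) has_real_derivative c * t) (at t within {0..h})"
      by (auto intro!: derivative_eq_intros)
    have dp: "(p has_real_derivative a t + t * a' t) (at t within {0..h})"
      unfolding p_def by (auto intro!: derivative_eq_intros dah[OF t] simp: algebra_simps)
    have dq: "(q has_real_derivative b t + t * b' t) (at t within {0..h})"
      unfolding q_def by (auto intro!: derivative_eq_intros dbh[OF t] simp: algebra_simps)
    have "(V has_vector_derivative V' t) (at t within {0..h})"
      unfolding V_def V'_def
      by (intro has_vector_derivative_mult exp_chain dp dq)
    then show "(V has_vector_derivative L t * V t + (V' t - L t * V t)) (at t within {0..h})" by simp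
    define Q where "Q = exp (q t *\<^sub>R B)"
    define R where "R = exp (p t *\<^sub>R A)"
    have e: "V' t - L t * V t = (t * b' t) *\<^sub>R (B * Q * R) + (t * a' t) *\<^sub>R (Ad B (q t) A * Q * R)
        + a t *\<^sub>R ((Ad B (q t) A - A) * Q * R)"
      unfolding V'_def L_def V_def Q_def[symmetric] R_def[symmetric]
      by (simp add: algebra_simps exp_Y_Z[of _ B] Q_def)
    have "norm (V' t - L t * V t) \<le> norm ((t * b' t) *\<^sub>R (B * Q * R)) + norm ((t * a' t) *\<^sub>R (Ad B (q t) A * Q * R))
        + norm (a t *\<^sub>R ((Ad B (q t) A - A) * Q * R))"
      unfolding e by (rule order_trans[OF norm_triangle_ineq add_right_mono[OF norm_triangle_ineq]])
    also have "\<dots> \<le> (t * b1) * norm B + (t * a1) * norm A + a0 * (b0 * t * norm (cm A B))"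
    proof (intro add_mono)
      have tt: "0 \<le> t" using t by simp
      show "norm ((t * b' t) *\<^sub>R (B * Q * R)) \<le> t * b1 * norm B"
        unfolding norm_scaleR Q_def R_def
        by (rule mult_mono) (use hb1[OF sub[OF t]] tt nQR in \<open>auto simp: abs_mult intro: mult_left_mono\<close>)
      show "norm ((t * a' t) *\<^sub>R (Ad B (q t) A * Q * R)) \<le> t * a1 * norm A"
        unfolding norm_scaleR Q_def R_def
        by (rule mult_mono) (use ha1[OF sub[OF t]] tt order_trans[OF nQR Ad_norm[OF skB]] in \<open>auto simp: abs_mult intro: mult_left_mono\<close>)
      have qb: "\<bar>q t\<bar> \<le> b0 * t" using hb0[OF sub[OF t]] tt by (simp add: q_def abs_mult mult_right_mono)
      show "norm (a t *\<^sub>R ((Ad B (q t) A - A) * Q * R)) \<le> a0 * (b0 * t * norm (cm A B))"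
        unfolding norm_scaleR Q_def R_def
      proof (rule mult_mono)
        show "\<bar>a t\<bar> \<le> a0" by (rule ha0[OF sub[OF t]])
        have "norm ((Ad B (q t) A - A) * exp (q t *\<^sub>R B) * exp (p t *\<^sub>R A)) \<le> norm (Ad B (q t) A - A)" by (rule nQR)
        also have "\<dots> \<le> \<bar>q t\<bar> * norm (cm B A)" by (rule F3[OF skB])
        also have "\<dots> \<le> b0 * t * norm (cm A B)" using qb by (simp add: cm_swap[of B A] mult_right_mono)
        finally show "norm ((Ad B (q t) A - A) * exp (q t *\<^sub>R B) * exp (p t *\<^sub>R A)) \<le> b0 * t * norm (cm A B)" .
      qed (use a0nn in auto)
    qed
    finally show "norm (V' t - L t * V t) \<le> c * t" by (simp add: c_def algebra_simps)
  qed
  then show ?thesis by (simp add: V_def c_def p_def q_def mult.commute)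
qed

lemma half_chain:
  assumes "(f has_real_derivative D) (at (t/2) within {0..h})" "t \<in> {0..h}"
  shows "((\<lambda>t. f (t/2)) has_real_derivative D / 2) (at t within {0..h})"
proof -
  have "(\<lambda>t. t / 2) ` {0..h} \<subseteq> {0..h}" using hh by auto
  then have d1: "(f has_real_derivative D) (at ((\<lambda>t. t/2) t) within (\<lambda>t. t / 2) ` {0..h})"
    using DERIV_subset[OF assms(1)] by simp
  have d2: "((\<lambda>t. t / 2) has_real_derivative 1 / 2) (at t within {0..h})"
    by (auto intro!: derivative_eq_intros)
  from DERIV_image_chain[OF d1 d2] show ?thesis by (simp add: o_def)
qed

lemma lip:
  assumes "(\<And>t. t \<in> {0..h} \<Longrightarrow> (f has_real_derivative f' t) (at t within {0..h}))"
    and "\<And>t. t \<in> {0..h} \<Longrightarrow> \<bar>f' t\<bar> \<le> M"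
    and "0 \<le> s" "s \<le> u" "u \<le> h"
  shows "\<bar>f u - f s\<bar> \<le> M * (u - s)"
proof -
  have sub2: "{s..u} \<subseteq> {0..h}" using assms by auto
  have "norm (f u - f s) \<le> M * u - M * s"
    by (rule bnd[where F'=f' and g'="\<lambda>_. M"])
      (use assms sub2 in \<open>auto intro!: derivative_eq_intros DERIV_subset[OF assms(1)]
         simp: has_real_derivative_iff_has_vector_derivative[symmetric]\<close>)
  then show ?thesis by (simp add: algebra_simps)
qed

lemma p_bound: assumes t: "t \<in> {0..h}" shows "\<bar>\<alpha> t - \<alpha> (t/2)\<bar> \<le> a0 * t / 2"
  using lip[OF d\<alpha> ha0[OF sub], of "t/2" t] t by auto

lemma p_taylor: assumes t: "t \<in> {0..h}" shows "\<bar>\<alpha> t - \<alpha> (t/2) - t/2 * a (t/2)\<bar> \<le> a1 * t\<^sup>2 / 8"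
proof -
  have sub2: "{t/2..t} \<subseteq> {0..h}" using t by auto
  have "norm ((\<alpha> t - t * a (t/2)) - (\<alpha> (t/2) - t/2 * a (t/2))) \<le> a1 * (t - t/2)\<^sup>2 / 2 - a1 * (t/2 - t/2)\<^sup>2 / 2"
  proof (rule bnd[where F="\<lambda>s. \<alpha> s - s * a (t/2)" and F'="\<lambda>s. a s - a (t/2)" and g'="\<lambda>s. a1 * (s - t/2)"])
    show "t/2 \<le> t" using t by simp
    fix s assume s: "s \<in> {t/2..t}"
    then have s0: "s \<in> {0..h}" using sub2 by auto
    show "((\<lambda>s. \<alpha> s - s * a (t/2)) has_vector_derivative a s - a (t/2)) (at s within {t/2..t})"
      unfolding has_real_derivative_iff_has_vector_derivative[symmetric]
      by (auto intro!: derivative_eq_intros DERIV_subset[OF d\<alpha>[OF s0] sub2])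
    show "((\<lambda>s. a1 * (s - t/2)\<^sup>2 / 2) has_real_derivative a1 * (s - t/2)) (at s within {t/2..t})"
      by (auto intro!: derivative_eq_intros)
    show "norm (a s - a (t/2)) \<le> a1 * (s - t/2)"
      using lip[OF dah ha1[OF sub], of "t/2" s] s t by auto
  qed
  then show ?thesis by (simp add: algebra_simps power2_eq_square)
qed

lemma b_taylor: assumes t: "t \<in> {0..h}" shows "\<bar>\<beta> t - t * b t\<bar> \<le> b1 * t\<^sup>2 / 2"
proof -
  have sub2: "{0..t} \<subseteq> {0..h}" using t by auto
  have "norm ((\<beta> t - t * b t) - (\<beta> 0 - 0 * b t)) \<le> (- b1 * (t - t)\<^sup>2 / 2) - (- b1 * (t - 0)\<^sup>2 / 2)"
  proof (rule bnd[where F="\<lambda>s. \<beta> s - s * b t" and F'="\<lambda>s. b s - b t" and g'="\<lambda>s. b1 * (t - s)"])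
    show "0 \<le> t" using t by simp
    fix s assume s: "s \<in> {0..t}"
    then have s0: "s \<in> {0..h}" using sub2 by auto
    show "((\<lambda>s. \<beta> s - s * b t) has_vector_derivative b s - b t) (at s within {0..t})"
      unfolding has_real_derivative_iff_has_vector_derivative[symmetric]
      by (auto intro!: derivative_eq_intros DERIV_subset[OF d\<beta>[OF s0] sub2])
    show "((\<lambda>s. - b1 * (t - s)\<^sup>2 / 2) has_real_derivative b1 * (t - s)) (at s within {0..t})"
      by (auto intro!: derivative_eq_intros simp: field_simps)
    show "norm (b s - b t) \<le> b1 * (t - s)"
      using lip[OF dbh hb1[OF sub], of s t] s t by (auto simp: abs_minus_commute)
  qed
  then show ?thesis by (simp add: \<beta>0)
qed

lemma int_half: "integral {h/2..h} a = \<alpha> h - \<alpha> (h/2)"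
proof -
  have "a integrable_on {0..h}" by (rule integrable_continuous_real[OF ca])
  from Henstock_Kurzweil_Integration.integral_combine[of 0 "h/2" h, OF _ _ this] hh show ?thesis by (simp add: ig_def)
qed

lemma cm_anti: "cm B' A' = - cm A' B'" by (simp add: cm_def)
lemma Ad_uminus: "Ad X s (- Y) = - Ad X s Y" by (simp add: Ad_def)

lemma normV: "norm (exp (s1 *\<^sub>R A) * exp (s2 *\<^sub>R B) * exp (s3 *\<^sub>R A)) \<le> 1"
proof -
  have "norm (exp (s1 *\<^sub>R A) * exp (s2 *\<^sub>R B) * exp (s3 *\<^sub>R A)) \<le> norm (exp (s1 *\<^sub>R A) * exp (s2 *\<^sub>R B))"
    by (rule nmr[OF skA])
  also have "\<dots> \<le> norm (exp (s1 *\<^sub>R A))" by (rule nmr[OF skB])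
  also have "\<dots> \<le> 1" by (rule exp_le1[OF skA])
  finally show ?thesis .
qed

lemma norm_XV: fixes X V :: "'a::real_normed_algebra" shows "norm V \<le> 1 \<Longrightarrow> norm (X * V) \<le> norm X"
  using norm_mult_ineq[of X V] by (metis mult_left_le norm_ge_zero order_trans)

lemma case4:
  "norm (exp (integral {h/2..h} a *\<^sub>R A) * exp (\<beta> h *\<^sub>R B) * exp (\<alpha> (h/2) *\<^sub>R A) - U h)
    \<le> (b0 * a0\<^sup>2 / 24 * norm (cm A (cm A B)) + (b0 * a1 / 24 + a0 * b1 / 12) * norm (cm A B)
        + a0 * b0\<^sup>2 / 12 * norm (cm B (cm B A))) * h ^ 3"
proof -
  define p where "p t = \<alpha> t - \<alpha> (t/2)" for t
  define r where "r t = \<alpha> (t/2)" for t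
  define V where "V t = exp (p t *\<^sub>R A) * exp (\<beta> t *\<^sub>R B) * exp (r t *\<^sub>R A)" for t
  define V' where "V' t = exp (p t *\<^sub>R A) * exp (\<beta> t *\<^sub>R B) * ((a (t/2) / 2) *\<^sub>R (A * exp (r t *\<^sub>R A)))
      + (exp (p t *\<^sub>R A) * (b t *\<^sub>R (B * exp (\<beta> t *\<^sub>R B)))
         + ((a t - a (t/2) / 2) *\<^sub>R (A * exp (p t *\<^sub>R A))) * exp (\<beta> t *\<^sub>R B)) * exp (r t *\<^sub>R A)" for t
  define C1 where "C1 = norm (cm A (cm A B))"
  define C0 where "C0 = norm (cm A B)"
  define C2 where "C2 = norm (cm B (cm B A))"
  define c where "c = b0 * a0\<^sup>2 / 8 * C1 + (b0 * a1 / 8 + a0 * b1 / 4) * C0 + a0 * b0\<^sup>2 / 4 * C2"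
  have "norm (V h - U h) \<le> c * h ^ 3 / 3 - c * 0 ^ 3 / 3"
  proof (rule duhamel[where L=L and E="\<lambda>t. V' t - L t * V t" and g'="\<lambda>t. c * t\<^sup>2"])
    show "0 \<le> h" using hh by simp
    show "V 0 = U 0" by (simp add: V_def p_def r_def U0 \<alpha>0 \<beta>0)
    fix t assume t: "t \<in> {0..h}"
    have th: "t/2 \<in> {0..h}" using t by auto
    have tt: "0 \<le> t" using t by simp
    show "(U has_vector_derivative L t * U t) (at t within {0..h})" by (rule dUh[OF t])
    show "skew (L t)" by (rule skL)
    show "((\<lambda>t. c * t ^ 3 / 3) has_real_derivative c * t\<^sup>2) (at t within {0..h})"
      by (auto intro!: derivative_eq_intros simp: power2_eq_square)
    have dr: "(r has_real_derivative a (t/2) / 2) (at t within {0..h})"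
      unfolding r_def by (rule half_chain[OF d\<alpha>[OF th] t])
    have dp: "(p has_real_derivative a t - a (t/2) / 2) (at t within {0..h})"
      unfolding p_def by (intro DERIV_diff d\<alpha>[OF t] half_chain[OF d\<alpha>[OF th] t])
    have "(V has_vector_derivative V' t) (at t within {0..h})"
      unfolding V_def V'_def
      by (intro has_vector_derivative_mult exp_chain dp dr d\<beta>[OF t])
    then show "(V has_vector_derivative L t * V t + (V' t - L t * V t)) (at t within {0..h})" by simp
    define P where "P = exp (p t *\<^sub>R A)"
    define Q where "Q = exp (\<beta> t *\<^sub>R B)"
    define R where "R = exp (r t *\<^sub>R A)"
    define ra where "ra = a (t/2) / 2"
    define X where "X = b t *\<^sub>R (Ad A (p t) B - B - p t *\<^sub>R Ad A (p t) (cm A B))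
       + (b t * p t - ra * \<beta> t) *\<^sub>R Ad A (p t) (cm A B)
       + ra *\<^sub>R Ad A (p t) (Ad B (\<beta> t) A - A - \<beta> t *\<^sub>R cm B A)"
    have e1: "Q * (A * R) = Ad B (\<beta> t) A * (Q * R)" unfolding Q_def by (rule exp_Y_Z)
    have e2: "P * (Ad B (\<beta> t) A * (Q * R)) = Ad A (p t) (Ad B (\<beta> t) A) * (P * (Q * R))" unfolding P_def by (rule exp_Y_Z)
    have e3: "P * (B * (Q * R)) = Ad A (p t) B * (P * (Q * R))" unfolding P_def by (rule exp_Y_Z)
    have V'eq: "V' t = b t *\<^sub>R (Ad A (p t) B * (P * (Q * R))) + ra *\<^sub>R (Ad A (p t) (Ad B (\<beta> t) A) * (P * (Q * R)))
        + (a t - ra) *\<^sub>R (A * (P * (Q * R)))"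
    proof -
      have "V' t = ra *\<^sub>R (P * (Q * (A * R))) + b t *\<^sub>R (P * (B * (Q * R))) + (a t - ra) *\<^sub>R (A * (P * (Q * R)))"
        unfolding V'_def P_def[symmetric] Q_def[symmetric] R_def[symmetric] ra_def[symmetric]
        by (simp add: algebra_simps)
      also have "\<dots> = b t *\<^sub>R (Ad A (p t) B * (P * (Q * R))) + ra *\<^sub>R (Ad A (p t) (Ad B (\<beta> t) A) * (P * (Q * R)))
        + (a t - ra) *\<^sub>R (A * (P * (Q * R)))"
        by (simp only: e1 e2 e3) (simp add: algebra_simps)
      finally show ?thesis .
    qed
    have ad1: "Ad A (p t) (Ad B (\<beta> t) A - A - \<beta> t *\<^sub>R cm B A)
        = Ad A (p t) (Ad B (\<beta> t) A) - A + \<beta> t *\<^sub>R Ad A (p t) (cm A B)"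
      by (simp add: Ad_add Ad_diff Ad_self Ad_scaleR cm_anti[of B A] Ad_uminus)
    have Xeq: "X = b t *\<^sub>R Ad A (p t) B - b t *\<^sub>R B + ra *\<^sub>R Ad A (p t) (Ad B (\<beta> t) A) - ra *\<^sub>R A"
      unfolding X_def ad1 by (simp add: algebra_simps)
    have E: "V' t - L t * V t = X * (P * (Q * R))"
      unfolding V'eq Xeq L_def V_def P_def[symmetric] Q_def[symmetric] R_def[symmetric]
      by (simp add: algebra_simps)
    have nV: "norm (P * (Q * R)) \<le> 1" using normV by (simp add: P_def Q_def R_def mult.assoc)
    have pb: "\<bar>p t\<bar> \<le> a0 * t / 2" unfolding p_def by (rule p_bound[OF t])
    have p2: "(p t)\<^sup>2 \<le> (a0 * t / 2)\<^sup>2" using pb by (metis abs_ge_zero order_trans power2_abs power_mono)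
    have bb: "\<bar>\<beta> t\<bar> \<le> b0 * t" by (rule \<beta>_bound[OF t])
    have b2: "(\<beta> t)\<^sup>2 \<le> (b0 * t)\<^sup>2" using bb by (metis abs_ge_zero order_trans power2_abs power_mono)
    have rab: "\<bar>ra\<bar> \<le> a0 / 2" using ha0[OF sub[OF th]] by (simp add: ra_def)
    have bt: "\<bar>b t\<bar> \<le> b0" by (rule hb0[OF sub[OF t]])
    have C1nn: "0 \<le> C1" "0 \<le> C0" "0 \<le> C2" by (simp_all add: C1_def C0_def C2_def)
    have n1: "norm (b t *\<^sub>R (Ad A (p t) B - B - p t *\<^sub>R Ad A (p t) (cm A B))) \<le> b0 * ((a0 * t / 2)\<^sup>2 / 2 * C1)"
    proof -
      have "norm (Ad A (p t) B - B - p t *\<^sub>R Ad A (p t) (cm A B)) \<le> (p t)\<^sup>2 / 2 * C1"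
        unfolding C1_def by (rule F4'[OF skA])
      also have "\<dots> \<le> (a0 * t / 2)\<^sup>2 / 2 * C1" using p2 C1nn by (intro mult_right_mono) auto
      finally show ?thesis unfolding norm_scaleR
        by (rule mult_mono[OF bt]) (use b0nn in auto)
    qed
    have n2: "norm ((b t * p t - ra * \<beta> t) *\<^sub>R Ad A (p t) (cm A B)) \<le> (b0 * (a1 * t\<^sup>2 / 8) + a0 / 2 * (b1 * t\<^sup>2 / 2)) * C0"
    proof -
      have eq: "b t * p t - ra * \<beta> t = b t * (p t - t/2 * a (t/2)) + ra * (t * b t - \<beta> t)"
        by (simp add: ra_def field_simps)
      have "\<bar>b t * p t - ra * \<beta> t\<bar> \<le> \<bar>b t\<bar> * \<bar>p t - t/2 * a (t/2)\<bar> + \<bar>ra\<bar> * \<bar>t * b t - \<beta> t\<bar>"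
        unfolding eq by (metis abs_mult abs_triangle_ineq)
      also have "\<dots> \<le> b0 * (a1 * t\<^sup>2 / 8) + a0 / 2 * (b1 * t\<^sup>2 / 2)"
      proof (rule add_mono)
        show "\<bar>b t\<bar> * \<bar>p t - t/2 * a (t/2)\<bar> \<le> b0 * (a1 * t\<^sup>2 / 8)"
          using p_taylor[OF t] bt b0nn unfolding p_def by (intro mult_mono) auto
        show "\<bar>ra\<bar> * \<bar>t * b t - \<beta> t\<bar> \<le> a0 / 2 * (b1 * t\<^sup>2 / 2)"
          using b_taylor[OF t] rab a0nn by (intro mult_mono) (auto simp: abs_minus_commute)
      qed
      finally have "\<bar>b t * p t - ra * \<beta> t\<bar> \<le> b0 * (a1 * t\<^sup>2 / 8) + a0 / 2 * (b1 * t\<^sup>2 / 2)" .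
      moreover have "norm (Ad A (p t) (cm A B)) \<le> C0" unfolding C0_def by (rule Ad_norm[OF skA])
      ultimately show ?thesis unfolding norm_scaleR
        by (rule mult_mono) (use a0nn b0nn a1nn b1nn in auto)
    qed
    have n3: "norm (ra *\<^sub>R Ad A (p t) (Ad B (\<beta> t) A - A - \<beta> t *\<^sub>R cm B A)) \<le> a0 / 2 * ((b0 * t)\<^sup>2 / 2 * C2)"
    proof -
      have "norm (Ad A (p t) (Ad B (\<beta> t) A - A - \<beta> t *\<^sub>R cm B A)) \<le> norm (Ad B (\<beta> t) A - A - \<beta> t *\<^sub>R cm B A)"
        by (rule Ad_norm[OF skA])
      also have "\<dots> \<le> (\<beta> t)\<^sup>2 / 2 * C2" unfolding C2_def by (rule F4[OF skB])
      also have "\<dots> \<le> (b0 * t)\<^sup>2 / 2 * C2" using b2 C1nn by (intro mult_right_mono) auto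
      finally show ?thesis unfolding norm_scaleR
        by (rule mult_mono[OF rab]) (use a0nn in auto)
    qed
    have "norm (V' t - L t * V t) \<le> norm X" unfolding E by (rule norm_XV[OF nV])
    also have "\<dots> \<le> b0 * ((a0 * t / 2)\<^sup>2 / 2 * C1) + (b0 * (a1 * t\<^sup>2 / 8) + a0 / 2 * (b1 * t\<^sup>2 / 2)) * C0
        + a0 / 2 * ((b0 * t)\<^sup>2 / 2 * C2)"
      unfolding X_def
      by (rule order_trans[OF norm_triangle_ineq add_mono[OF order_trans[OF norm_triangle_ineq add_mono[OF n1 n2]] n3]])
    also have "\<dots> = c * t\<^sup>2" by (simp add: c_def power2_eq_square field_simps)
    finally show "norm (V' t - L t * V t) \<le> c * t\<^sup>2" .
  qed
  moreover have "V h = exp (integral {h/2..h} a *\<^sub>R A) * exp (\<beta> h *\<^sub>R B) * exp (\<alpha> (h/2) *\<^sub>R A)"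
    by (simp add: V_def p_def r_def int_half)
  ultimately show ?thesis by (simp add: c_def C1_def C0_def C2_def field_simps power3_eq_cube power2_eq_square)
qed

lemma taylor_half:
  assumes df: "\<And>s. s \<in> {0..h} \<Longrightarrow> (f has_real_derivative f' s) (at s within {0..h})"
    and ddf: "\<And>s. s \<in> {0..h} \<Longrightarrow> (f' has_real_derivative f'' s) (at s within {0..h})"
    and bf: "\<And>s. s \<in> {0..h} \<Longrightarrow> \<bar>f'' s\<bar> \<le> M"
    and t: "t \<in> {0..h}"
  shows "\<bar>f t - f (t/2) - t/2 * f' (t/2)\<bar> \<le> M * t\<^sup>2 / 8"
proof -
  have sub2: "{t/2..t} \<subseteq> {0..h}" using t by auto
  have "norm ((f t - t * f' (t/2)) - (f (t/2) - t/2 * f' (t/2))) \<le> M * (t - t/2)\<^sup>2 / 2 - M * (t/2 - t/2)\<^sup>2 / 2"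
  proof (rule bnd[where F="\<lambda>s. f s - s * f' (t/2)" and F'="\<lambda>s. f' s - f' (t/2)" and g'="\<lambda>s. M * (s - t/2)"])
    show "t/2 \<le> t" using t by simp
    fix s assume s: "s \<in> {t/2..t}"
    then have s0: "s \<in> {0..h}" using sub2 by auto
    show "((\<lambda>s. f s - s * f' (t/2)) has_vector_derivative f' s - f' (t/2)) (at s within {t/2..t})"
      unfolding has_real_derivative_iff_has_vector_derivative[symmetric]
      by (auto intro!: derivative_eq_intros DERIV_subset[OF df[OF s0] sub2])
    show "((\<lambda>s. M * (s - t/2)\<^sup>2 / 2) has_real_derivative M * (s - t/2)) (at s within {t/2..t})"
      by (auto intro!: derivative_eq_intros)
    show "norm (f' s - f' (t/2)) \<le> M * (s - t/2)"
      using lip[OF ddf bf, of "t/2" s] s t by auto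
  qed
  then show ?thesis by (simp add: algebra_simps power2_eq_square)
qed

lemma case3:
  "norm (exp ((h/2 * a (h/2)) *\<^sub>R A) * exp ((h * b (h/2)) *\<^sub>R B) * exp ((h/2 * a (h/2)) *\<^sub>R A) - U h)
    \<le> (a2 / 24 * norm A + b2 / 24 * norm B + (a0 * b1 + a1 * b0) / 12 * norm (cm A B)
        + a0\<^sup>2 * b0 / 24 * norm (cm A (cm A B)) + a0 * b0\<^sup>2 / 12 * norm (cm B (cm B A))) * h ^ 3"
proof -
  define p where "p t = t/2 * a (t/2)" for t
  define q where "q t = t * b (t/2)" for t
  define dp where "dp t = a (t/2) / 2 + t/2 * (a' (t/2) / 2)" for t
  define dq where "dq t = b (t/2) + t * (b' (t/2) / 2)" for t
  define V where "V t = exp (p t *\<^sub>R A) * exp (q t *\<^sub>R B) * exp (p t *\<^sub>R A)" for t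
  define V' where "V' t = exp (p t *\<^sub>R A) * exp (q t *\<^sub>R B) * (dp t *\<^sub>R (A * exp (p t *\<^sub>R A)))
      + (exp (p t *\<^sub>R A) * (dq t *\<^sub>R (B * exp (q t *\<^sub>R B)))
         + (dp t *\<^sub>R (A * exp (p t *\<^sub>R A))) * exp (q t *\<^sub>R B)) * exp (p t *\<^sub>R A)" for t
  define nA where "nA = norm A"
  define nB where "nB = norm B"
  define C1 where "C1 = norm (cm A (cm A B))"
  define C0 where "C0 = norm (cm A B)"
  define C2 where "C2 = norm (cm B (cm B A))"
  define c where "c = a2 / 8 * nA + b2 / 8 * nB + (a0 * b1 / 4 + a1 * b0 / 4) * C0 + a0\<^sup>2 * b0 / 8 * C1 + a0 * b0\<^sup>2 / 4 * C2"
  have "norm (V h - U h) \<le> c * h ^ 3 / 3 - c * 0 ^ 3 / 3"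
  proof (rule duhamel[where L=L and E="\<lambda>t. V' t - L t * V t" and g'="\<lambda>t. c * t\<^sup>2"])
    show "0 \<le> h" using hh by simp
    show "V 0 = U 0" by (simp add: V_def p_def q_def U0)
    fix t assume t: "t \<in> {0..h}"
    have th: "t/2 \<in> {0..h}" using t by auto
    have tt: "0 \<le> t" using t by simp
    show "(U has_vector_derivative L t * U t) (at t within {0..h})" by (rule dUh[OF t])
    show "skew (L t)" by (rule skL)
    show "((\<lambda>t. c * t ^ 3 / 3) has_real_derivative c * t\<^sup>2) (at t within {0..h})"
      by (auto intro!: derivative_eq_intros simp: power2_eq_square)
    have dpp: "(p has_real_derivative dp t) (at t within {0..h})"
    proof -
      have "((\<lambda>t. t/2 * a (t/2)) has_real_derivative t/2 * (a' (t/2) / 2) + (1/2) * a (t/2)) (at t within {0..h})"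
        by (intro DERIV_mult' half_chain[OF dah[OF th] t]) (auto intro!: derivative_eq_intros)
      then show ?thesis unfolding p_def dp_def by (simp add: algebra_simps)
    qed
    have dqq: "(q has_real_derivative dq t) (at t within {0..h})"
    proof -
      have "((\<lambda>t. t * b (t/2)) has_real_derivative t * (b' (t/2) / 2) + 1 * b (t/2)) (at t within {0..h})"
        by (intro DERIV_mult' half_chain[OF dbh[OF th] t]) (auto intro!: derivative_eq_intros)
      then show ?thesis unfolding q_def dq_def by (simp add: algebra_simps)
    qed
    have "(V has_vector_derivative V' t) (at t within {0..h})"
      unfolding V_def V'_def
      by (intro has_vector_derivative_mult exp_chain dpp dqq)
    then show "(V has_vector_derivative L t * V t + (V' t - L t * V t)) (at t within {0..h})" by simp
    define P where "P = exp (p t *\<^sub>R A)"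
    define Q where "Q = exp (q t *\<^sub>R B)"
    define ph where "ph = a (t/2) / 2"
    define bh where "bh = b (t/2)"
    define X where "X = (dp t - a t) *\<^sub>R A + dp t *\<^sub>R A + (dq t - b t) *\<^sub>R B
       + (t * (b' (t/2) / 2)) *\<^sub>R (Ad A (p t) B - B)
       + (t/2 * (a' (t/2) / 2)) *\<^sub>R Ad A (p t) (Ad B (q t) A - A)
       + bh *\<^sub>R (Ad A (p t) B - B - p t *\<^sub>R Ad A (p t) (cm A B))
       + ph *\<^sub>R Ad A (p t) (Ad B (q t) A - A - q t *\<^sub>R cm B A)
       + (bh * p t - ph * q t) *\<^sub>R Ad A (p t) (cm A B)"
    have e1: "Q * (A * P) = Ad B (q t) A * (Q * P)" unfolding Q_def by (rule exp_Y_Z)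
    have e2: "P * (Ad B (q t) A * (Q * P)) = Ad A (p t) (Ad B (q t) A) * (P * (Q * P))" unfolding P_def by (rule exp_Y_Z)
    have e3: "P * (B * (Q * P)) = Ad A (p t) B * (P * (Q * P))" unfolding P_def by (rule exp_Y_Z)
    have V'eq: "V' t = dq t *\<^sub>R (Ad A (p t) B * (P * (Q * P))) + dp t *\<^sub>R (Ad A (p t) (Ad B (q t) A) * (P * (Q * P)))
        + dp t *\<^sub>R (A * (P * (Q * P)))"
    proof -
      have "V' t = dp t *\<^sub>R (P * (Q * (A * P))) + dq t *\<^sub>R (P * (B * (Q * P))) + dp t *\<^sub>R (A * (P * (Q * P)))"
        unfolding V'_def P_def[symmetric] Q_def[symmetric]
        by (simp add: algebra_simps)
      also have "\<dots> = dq t *\<^sub>R (Ad A (p t) B * (P * (Q * P))) + dp t *\<^sub>R (Ad A (p t) (Ad B (q t) A) * (P * (Q * P)))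
        + dp t *\<^sub>R (A * (P * (Q * P)))"
        by (simp only: e1 e2 e3) (simp add: algebra_simps)
      finally show ?thesis .
    qed
    have dpe: "ph = dp t - t/2 * (a' (t/2) / 2)" by (simp add: dp_def ph_def)
    have dqe: "bh = dq t - t * (b' (t/2) / 2)" by (simp add: dq_def bh_def)
    have Xeq: "X = dq t *\<^sub>R Ad A (p t) B - b t *\<^sub>R B + dp t *\<^sub>R Ad A (p t) (Ad B (q t) A) + dp t *\<^sub>R A - a t *\<^sub>R A"
      unfolding X_def dpe dqe
      by (simp add: algebra_simps Ad_add Ad_diff Ad_self Ad_scaleR cm_anti[of B A] Ad_uminus)
    have E: "V' t - L t * V t = X * (P * (Q * P))"
      unfolding V'eq Xeq L_def V_def P_def[symmetric] Q_def[symmetric]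
      by (simp add: algebra_simps)
    have nV: "norm (P * (Q * P)) \<le> 1" using normV by (simp add: P_def Q_def mult.assoc)
    have pb: "\<bar>p t\<bar> \<le> a0 * t / 2" using mult_left_mono[OF ha0[OF sub[OF th]] tt] tt by (simp add: p_def abs_mult mult.commute)
    have p2: "(p t)\<^sup>2 \<le> (a0 * t / 2)\<^sup>2" using pb by (metis abs_ge_zero order_trans power2_abs power_mono)
    have qb: "\<bar>q t\<bar> \<le> b0 * t" using mult_left_mono[OF hb0[OF sub[OF th]] tt] tt by (simp add: q_def abs_mult mult.commute)
    have q2: "(q t)\<^sup>2 \<le> (b0 * t)\<^sup>2" using qb by (metis abs_ge_zero order_trans power2_abs power_mono)
    have phb: "\<bar>ph\<bar> \<le> a0 / 2" using ha0[OF sub[OF th]] by (simp add: ph_def)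
    have bhb: "\<bar>bh\<bar> \<le> b0" using hb0[OF sub[OF th]] by (simp add: bh_def)
    have nn: "0 \<le> C1" "0 \<le> C0" "0 \<le> C2" "0 \<le> nA" "0 \<le> nB" by (simp_all add: C1_def C0_def C2_def nA_def nB_def)
    have n1: "norm ((dp t - a t) *\<^sub>R A + dp t *\<^sub>R A) \<le> a2 * t\<^sup>2 / 8 * nA"
    proof -
      have "(dp t - a t) *\<^sub>R A + dp t *\<^sub>R A = ((dp t - a t) + dp t) *\<^sub>R A" by (rule scaleR_add_left[symmetric])
      also have "\<dots> = (2 * dp t - a t) *\<^sub>R A" by simp
      finally have eqA: "(dp t - a t) *\<^sub>R A + dp t *\<^sub>R A = (2 * dp t - a t) *\<^sub>R A" .
      have "\<bar>2 * dp t - a t\<bar> = \<bar>a t - a (t/2) - t/2 * a' (t/2)\<bar>" by (simp add: dp_def algebra_simps)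
      also have "\<dots> \<le> a2 * t\<^sup>2 / 8" by (rule taylor_half[OF dah ddah ha2[OF sub] t])
      finally show ?thesis unfolding eqA norm_scaleR nA_def by (rule mult_right_mono) simp
    qed
    have n2: "norm ((dq t - b t) *\<^sub>R B) \<le> b2 * t\<^sup>2 / 8 * nB"
    proof -
      have "\<bar>dq t - b t\<bar> = \<bar>b t - b (t/2) - t/2 * b' (t/2)\<bar>" by (simp add: dq_def algebra_simps)
      also have "\<dots> \<le> b2 * t\<^sup>2 / 8" by (rule taylor_half[OF dbh ddbh hb2[OF sub] t])
      finally show ?thesis unfolding norm_scaleR nB_def by (rule mult_right_mono) simp
    qed
    have n3: "norm ((t * (b' (t/2) / 2)) *\<^sub>R (Ad A (p t) B - B)) \<le> (t * (b1 / 2)) * (a0 * t / 2 * C0)"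
    proof -
      have "norm (Ad A (p t) B - B) \<le> \<bar>p t\<bar> * C0" unfolding C0_def by (rule F3[OF skA])
      also have "\<dots> \<le> a0 * t / 2 * C0" using pb nn by (intro mult_right_mono) auto
      finally have x: "norm (Ad A (p t) B - B) \<le> a0 * t / 2 * C0" .
      have y: "\<bar>t * (b' (t/2) / 2)\<bar> \<le> t * (b1 / 2)" using hb1[OF sub[OF th]] tt by (simp add: abs_mult mult_left_mono)
      show ?thesis unfolding norm_scaleR by (rule mult_mono[OF y x]) (use tt b1nn in auto)
    qed
    have n4: "norm ((t/2 * (a' (t/2) / 2)) *\<^sub>R Ad A (p t) (Ad B (q t) A - A)) \<le> (t/2 * (a1 / 2)) * (b0 * t * C0)"
    proof -
      have "norm (Ad A (p t) (Ad B (q t) A - A)) \<le> norm (Ad B (q t) A - A)" by (rule Ad_norm[OF skA])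
      also have "\<dots> \<le> \<bar>q t\<bar> * norm (cm B A)" by (rule F3[OF skB])
      also have "\<dots> \<le> b0 * t * C0" using qb nn by (simp add: C0_def cm_swap[of B A] mult_right_mono)
      finally have x: "norm (Ad A (p t) (Ad B (q t) A - A)) \<le> b0 * t * C0" .
      have y: "\<bar>t/2 * (a' (t/2) / 2)\<bar> \<le> t/2 * (a1 / 2)" using ha1[OF sub[OF th]] tt by (simp add: abs_mult mult_left_mono)
      show ?thesis unfolding norm_scaleR by (rule mult_mono[OF y x]) (use tt a1nn in auto)
    qed
    have n5: "norm (bh *\<^sub>R (Ad A (p t) B - B - p t *\<^sub>R Ad A (p t) (cm A B))) \<le> b0 * ((a0 * t / 2)\<^sup>2 / 2 * C1)"
    proof -
      have "norm (Ad A (p t) B - B - p t *\<^sub>R Ad A (p t) (cm A B)) \<le> (p t)\<^sup>2 / 2 * C1"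
        unfolding C1_def by (rule F4'[OF skA])
      also have "\<dots> \<le> (a0 * t / 2)\<^sup>2 / 2 * C1" using p2 nn by (intro mult_right_mono) auto
      finally show ?thesis unfolding norm_scaleR
        by (rule mult_mono[OF bhb]) (use b0nn in auto)
    qed
    have n6: "norm (ph *\<^sub>R Ad A (p t) (Ad B (q t) A - A - q t *\<^sub>R cm B A)) \<le> a0 / 2 * ((b0 * t)\<^sup>2 / 2 * C2)"
    proof -
      have "norm (Ad A (p t) (Ad B (q t) A - A - q t *\<^sub>R cm B A)) \<le> norm (Ad B (q t) A - A - q t *\<^sub>R cm B A)"
        by (rule Ad_norm[OF skA])
      also have "\<dots> \<le> (q t)\<^sup>2 / 2 * C2" unfolding C2_def by (rule F4[OF skB])
      also have "\<dots> \<le> (b0 * t)\<^sup>2 / 2 * C2" using q2 nn by (intro mult_right_mono) auto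
      finally show ?thesis unfolding norm_scaleR
        by (rule mult_mono[OF phb]) (use a0nn in auto)
    qed
    have n7: "norm ((bh * p t - ph * q t) *\<^sub>R Ad A (p t) (cm A B)) \<le> 0"
      by (simp add: bh_def ph_def p_def q_def)
    have "norm (V' t - L t * V t) \<le> norm X" unfolding E by (rule norm_XV[OF nV])
    also have "\<dots> \<le> a2 * t\<^sup>2 / 8 * nA + b2 * t\<^sup>2 / 8 * nB + (t * (b1 / 2)) * (a0 * t / 2 * C0)
        + (t/2 * (a1 / 2)) * (b0 * t * C0) + b0 * ((a0 * t / 2)\<^sup>2 / 2 * C1) + a0 / 2 * ((b0 * t)\<^sup>2 / 2 * C2) + 0"
      unfolding X_def
      by (intro order_trans[OF norm_triangle_ineq add_mono] n1 n2 n3 n4 n5 n6 n7)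
    also have "\<dots> = c * t\<^sup>2" by (simp add: c_def power2_eq_square field_simps)
    finally show "norm (V' t - L t * V t) \<le> c * t\<^sup>2" .
  qed
  moreover have "V h = exp ((h/2 * a (h/2)) *\<^sub>R A) * exp ((h * b (h/2)) *\<^sub>R B) * exp ((h/2 * a (h/2)) *\<^sub>R A)"
    by (simp add: V_def p_def q_def)
  ultimately show ?thesis by (simp add: c_def C1_def C0_def C2_def nA_def nB_def field_simps power3_eq_cube power2_eq_square)
qed
end

lemma supn_bound:
  assumes "continuous_on {0..T} f" "t \<in> {0..T}"
  shows "\<bar>f t\<bar> \<le> supn T f"
proof -
  have "compact ((\<lambda>t. \<bar>f t\<bar>) ` {0..T})"
    by (intro compact_continuous_image continuous_intros assms compact_Icc)
  then have "bdd_above ((\<lambda>t. \<bar>f t\<bar>) ` {0..T})"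
    by (intro bounded_imp_bdd_above compact_imp_bounded)
  then show ?thesis unfolding supn_def by (rule cSUP_upper[OF assms(2)])
qed

lemma cscale_add: "cscale c (X + Y) = cscale c X + cscale c (Y::'n::finite cmat)"
  by (simp add: cscale_def vec_eq_iff algebra_simps)
lemma cscale_diff: "cscale c (X - Y) = cscale c X - cscale c (Y::'n::finite cmat)"
  by (simp add: cscale_def vec_eq_iff algebra_simps)
lemma cscale_mult: "cscale c X ** cscale d Y = cscale (c * d) (X ** (Y::'n::finite cmat))"
  by (simp add: cscale_def vec_eq_iff matrix_matrix_mult_def sum_distrib_left algebra_simps)
lemma cscale_mult1: "cscale c (X ** Y) = cscale c X ** (Y::'n::finite cmat)"
  by (simp add: cscale_def vec_eq_iff matrix_matrix_mult_def sum_distrib_left algebra_simps)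
lemma cscale_mult2: "cscale c (X ** Y) = X ** cscale c (Y::'n::finite cmat)"
  by (simp add: cscale_def vec_eq_iff matrix_matrix_mult_def sum_distrib_left algebra_simps)
lemma cscale_cscale: "cscale c (cscale d X) = cscale (c * d) (X::'n::finite cmat)"
  by (simp add: cscale_def vec_eq_iff)
lemma scaleR_cscale: "r *\<^sub>R X = cscale (complex_of_real r) (X::'n::finite cmat)"
  by (simp add: cscale_def vec_eq_iff) (simp add: scaleR_conv_of_real)
lemma cscale_m1: "cscale (-1) X = - (X::'n::finite cmat)"
  by (simp add: cscale_def vec_eq_iff)

lemma Abs_diff: "Abs_sqm (X - Y) = Abs_sqm X - Abs_sqm Y"
  by (simp add: minus_sqm_def Abs_sqm_inverse)
lemma Abs_add: "Abs_sqm (X + Y) = Abs_sqm X + Abs_sqm Y"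
  by (simp add: plus_sqm_def Abs_sqm_inverse)
lemma Abs_mult: "Abs_sqm (X ** Y) = Abs_sqm X * Abs_sqm Y"
  by (simp add: times_sqm_def Abs_sqm_inverse)
lemma Abs_minus: "Abs_sqm (- X) = - Abs_sqm X"
  by (simp add: uminus_sqm_def Abs_sqm_inverse)
lemma Abs_scaleR: "Abs_sqm (r *\<^sub>R X) = r *\<^sub>R Abs_sqm X"
  by (simp add: scaleR_sqm_def Abs_sqm_inverse)

lemma Ak_Ak: "Ak X * Ak Y = - Abs_sqm (X ** Y)"
  by (simp add: Ak_def Abs_mult[symmetric] cscale_mult cscale_m1 Abs_minus)
lemma Ak_Abs: "Ak X * Abs_sqm M = Ak (X ** M)"
  by (simp add: Ak_def Abs_mult[symmetric] cscale_mult1)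
lemma Abs_Ak: "Abs_sqm M * Ak X = Ak (M ** X)"
  by (simp add: Ak_def Abs_mult[symmetric] cscale_mult2)
lemma Ak_diff: "Ak (X - Y) = Ak X - Ak Y"
  by (simp add: Ak_def cscale_diff Abs_diff)

lemma cm_AkAk: "cm (Ak X) (Ak Y) = - Abs_sqm (comm X Y)"
  by (simp add: cm_def Ak_Ak comm_def Abs_diff)
lemma cm_AkAbs: "cm (Ak X) (Abs_sqm M) = Ak (comm X M)"
  by (simp add: cm_def Ak_Abs Abs_Ak comm_def Ak_diff)

lemma n_cm1: "norm (cm (Ak X) (Ak Y)) = opnorm (comm X Y)"
  by (simp add: cm_AkAk opnorm_norm)
lemma n_cm2: "norm (cm (Ak X) (cm (Ak X) (Ak Y))) = opnorm (comm X (comm X Y))"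
  by (simp add: cm_AkAk cm_neg_right cm_AkAbs opnorm_Ak)
lemma n_cm3: "norm (cm (Ak Y) (cm (Ak Y) (Ak X))) = opnorm (comm Y (comm Y X))"
  by (rule n_cm2)
lemma n_cm4: "norm (cm (Ak Y) (cm (Ak X) (Ak Y))) = opnorm (comm Y (comm X Y))"
  by (simp add: cm_AkAk cm_neg_right cm_AkAbs opnorm_Ak)

lemma Ham_lemma:
  "Abs_sqm (cscale (- \<i>) (Ham f1 f2 H1 H2 t ** M)) = (f1 t *\<^sub>R Ak H1 + f2 t *\<^sub>R Ak H2) * Abs_sqm M"
  by (simp add: Ham_def Ak_def Abs_mult[symmetric] Abs_scaleR[symmetric] Abs_add[symmetric]
      scaleR_cscale cscale_mult1 cscale_add cscale_cscale mat_add_rdistrib mult.commute)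

lemma opnorm_Rep: "opnorm (Rep_sqm X - M) = norm (X - Abs_sqm M)"
  by (simp add: opnorm_norm Abs_diff Rep_sqm_inverse)

theorem theorem1:
  fixes H1 H2 :: "'n::finite cmat"
    and f1 f2 f1' f2' f1'' f2'' :: "real \<Rightarrow> real"
    and T h :: real
    and U :: "real \<Rightarrow> 'n cmat"
  assumes herm1: "hermitian H1" and herm2: "hermitian H2"
    and d1: "\<forall>t\<in>{0..T}. (f1 has_real_derivative f1' t) (at t within {0..T})"
    and dd1: "\<forall>t\<in>{0..T}. (f1' has_real_derivative f1'' t) (at t within {0..T})"
    and c1: "continuous_on {0..T} f1''"
    and d2: "\<forall>t\<in>{0..T}. (f2 has_real_derivative f2' t) (at t within {0..T})"
    and dd2: "\<forall>t\<in>{0..T}. (f2' has_real_derivative f2'' t) (at t within {0..T})"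
    and c2: "continuous_on {0..T} f2''"
    and h: "0 < h" "h \<le> T"
    and U0: "U 0 = mat 1"
    and Uode: "\<forall>t\<in>{0..T}. (U has_vector_derivative
                  cscale (- \<i>) (Ham f1 f2 H1 H2 t ** U t)) (at t within {0..T})"
  shows
   "opnorm (Us1 f1 f2 H1 H2 0 h - U h) \<le>
      (1/2 * supn T f1' * opnorm H1 + 1/2 * supn T f2' * opnorm H2
        + 1/2 * supn T f1 * supn T f2 * opnorm (comm H1 H2)) * h^2
      + (1/6 * supn T f1 * supn T f2' * opnorm (comm H1 H2)) * h^3
   \<and> opnorm (Ug1 f1 f2 H1 H2 0 h - U h) \<le>
      (1/2 * supn T f1 * supn T f2 * opnorm (comm H1 H2)) * h^2
   \<and> opnorm (Us2 f1 f2 H1 H2 0 h - U h) \<le>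
      (7/24 * supn T f1'' * opnorm H1 + 1/12 * supn T f1' * supn T f2 * opnorm H1
        + 7/24 * supn T f2'' * opnorm H2
        + 1/6 * (supn T f1' * supn T f2 + supn T f1 * supn T f2') * opnorm (comm H1 H2)
        + 1/24 * (supn T f1)^2 * supn T f2 * opnorm (comm H1 (comm H1 H2))
        + 1/12 * supn T f1 * (supn T f2)^2 * opnorm (comm H2 (comm H1 H2))) * h^3
      + (1/64 * supn T f1' * supn T f2' * opnorm H1
        + (1/192 * supn T f1 * supn T f2'' + 1/192 * supn T f1'' * supn T f2
           + 1/48 * supn T f1' * supn T f2') * opnorm (comm H1 H2)
        + 1/96 * supn T f1 * supn T f1' * supn T f2 * opnorm (comm H1 (comm H1 H2))
        + 1/48 * supn T f1 * supn T f2 * supn T f2' * opnorm (comm H2 (comm H1 H2))) * h^4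
      + (1/960 * (supn T f1')^2 * supn T f2 * opnorm (comm H1 (comm H1 H2))
        + 1/480 * supn T f1 * (supn T f2')^2 * opnorm (comm H2 (comm H1 H2))) * h^5
   \<and> opnorm (Ug2 f1 f2 H1 H2 0 h - U h) \<le>
      ((7/12 * supn T f1 * supn T f2' + 11/24 * supn T f1' * supn T f2) * opnorm (comm H1 H2)
        + 3/8 * (supn T f1)^2 * supn T f2 * opnorm (comm H1 (comm H1 H2))
        + 1/12 * supn T f1 * (supn T f2)^2 * opnorm (comm H2 (comm H2 H1))) * h^3"
proof -
  define A where "A = Ak H1"
  define B where "B = Ak H2"
  define W where "W t = Abs_sqm (U t)" for t
  have skA: "skew A" unfolding A_def by (rule herm_skew[OF herm1])
  have skB: "skew B" unfolding B_def by (rule herm_skew[OF herm2])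
  have cf1: "continuous_on {0..T} f1" using d1 by (intro DERIV_continuous_on) auto
  have cf2: "continuous_on {0..T} f2" using d2 by (intro DERIV_continuous_on) auto
  have cf1': "continuous_on {0..T} f1'" using dd1 by (intro DERIV_continuous_on) auto
  have cf2': "continuous_on {0..T} f2'" using dd2 by (intro DERIV_continuous_on) auto
  have W0: "W 0 = 1" by (simp add: W_def U0 one_sqm_def)
  have dW: "(W has_vector_derivative (f1 t *\<^sub>R A + f2 t *\<^sub>R B) * W t) (at t within {0..T})"
    if t: "t \<in> {0..T}" for t
    unfolding W_def using bounded_linear.has_vector_derivative[OF bl_Abs Uode[rule_format, OF t]]
    by (simp add: W_def Ham_lemma A_def B_def)
  note ctx = skA skB d1[rule_format] dd1[rule_format] d2[rule_format] dd2[rule_format]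
    supn_bound[OF cf1] supn_bound[OF cf1'] supn_bound[OF c1]
    supn_bound[OF cf2] supn_bound[OF cf2'] supn_bound[OF c2] h W0 dW
  have ug1: "Ug1 f1 f2 H1 H2 0 h = Rep_sqm (exp (ig f2 h *\<^sub>R B) * exp (ig f1 h *\<^sub>R A))"
    by (simp add: Ug1_def eprop_exp Rep_mult ig_def A_def B_def)
  have P2: "opnorm (Ug1 f1 f2 H1 H2 0 h - U h) \<le>
      (1/2 * supn T f1 * supn T f2 * opnorm (comm H1 H2)) * h^2"
    using case2[OF ctx] by (simp add: ug1 opnorm_Rep W_def A_def B_def n_cm1)
  define a0 where "a0 = supn T f1"
  define a1 where "a1 = supn T f1'"
  define a2 where "a2 = supn T f1''"
  define b0 where "b0 = supn T f2"
  define b1 where "b1 = supn T f2'"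
  define b2 where "b2 = supn T f2''"
  define nA where "nA = opnorm H1"
  define nB where "nB = opnorm H2"
  define C0 where "C0 = opnorm (comm H1 H2)"
  define C1 where "C1 = opnorm (comm H1 (comm H1 H2))"
  define C2 where "C2 = opnorm (comm H2 (comm H1 H2))"
  have T0: "0 \<in> {0..T}" using h by simp
  have nn: "0 \<le> a0" "0 \<le> a1" "0 \<le> a2" "0 \<le> b0" "0 \<le> b1" "0 \<le> b2"
    "0 \<le> nA" "0 \<le> nB" "0 \<le> C0" "0 \<le> C1" "0 \<le> C2" "0 \<le> h"
    using supn_bound[OF cf1 T0] supn_bound[OF cf1' T0] supn_bound[OF c1 T0]
      supn_bound[OF cf2 T0] supn_bound[OF cf2' T0] supn_bound[OF c2 T0] h
    by (auto simp: a0_def a1_def a2_def b0_def b1_def b2_def nA_def nB_def C0_def C1_def C2_def opnorm_nonneg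
        intro: order_trans[OF abs_ge_zero])
  have hp: "0 \<le> h^2" "0 \<le> h^3" "0 \<le> h^4" "0 \<le> h^5" using h by simp_all
  have nAe: "norm A = nA" by (simp add: A_def nA_def opnorm_Ak)
  have nBe: "norm B = nB" by (simp add: B_def nB_def opnorm_Ak)
  have C0e: "norm (cm A B) = C0" by (simp add: A_def B_def C0_def n_cm1)
  have C1e: "norm (cm A (cm A B)) = C1" by (simp add: A_def B_def C1_def n_cm2)
  have C2e: "norm (cm B (cm B A)) = C2"
  proof -
    have "cm B (cm B A) = - cm B (cm A B)" by (simp add: cm_def algebra_simps)
    then have "norm (cm B (cm B A)) = norm (cm B (cm A B))" by simp
    then show ?thesis by (simp add: A_def B_def C2_def n_cm4)
  qed
  have C2e': "norm (cm B (cm B A)) = opnorm (comm H2 (comm H2 H1))"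
    by (simp add: A_def B_def n_cm3)
  have us1: "Us1 f1 f2 H1 H2 0 h = Rep_sqm (exp ((f2 h * h) *\<^sub>R B) * exp ((f1 h * h) *\<^sub>R A))"
    by (simp add: Us1_def eprop_exp Rep_mult A_def B_def)
  have c1b: "opnorm (Us1 f1 f2 H1 H2 0 h - U h) \<le> (a1 * nA + b1 * nB + a0 * b0 * C0) * h\<^sup>2 / 2"
    using case1[OF ctx] by (simp add: us1 opnorm_Rep W_def nAe nBe C0e a0_def a1_def b0_def b1_def)
  have P1: "opnorm (Us1 f1 f2 H1 H2 0 h - U h) \<le>
      (1/2 * supn T f1' * opnorm H1 + 1/2 * supn T f2' * opnorm H2
        + 1/2 * supn T f1 * supn T f2 * opnorm (comm H1 H2)) * h^2
      + (1/6 * supn T f1 * supn T f2' * opnorm (comm H1 H2)) * h^3"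
  proof -
    have "0 \<le> (1/6 * a0 * b1 * C0) * h^3" using nn hp by simp
    then show ?thesis using c1b
      unfolding a0_def[symmetric] a1_def[symmetric] b0_def[symmetric] b1_def[symmetric]
        nA_def[symmetric] nB_def[symmetric] C0_def[symmetric]
      by (simp add: field_simps)
  qed
  have us2: "Us2 f1 f2 H1 H2 0 h = Rep_sqm (exp ((h/2 * f1 (h/2)) *\<^sub>R A) * exp ((h * f2 (h/2)) *\<^sub>R B) * exp ((h/2 * f1 (h/2)) *\<^sub>R A))"
    by (simp add: Us2_def eprop_exp Rep_mult A_def B_def)
  have c3b: "opnorm (Us2 f1 f2 H1 H2 0 h - U h) \<le> (a2 / 24 * nA + b2 / 24 * nB + (a0 * b1 + a1 * b0) / 12 * C0
        + a0\<^sup>2 * b0 / 24 * C1 + a0 * b0\<^sup>2 / 12 * C2) * h ^ 3"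
    using case3[OF ctx] by (simp add: us2 opnorm_Rep W_def nAe nBe C0e C1e C2e a0_def a1_def a2_def b0_def b1_def b2_def)
  have P3: "opnorm (Us2 f1 f2 H1 H2 0 h - U h) \<le>
      (7/24 * a2 * nA + 1/12 * a1 * b0 * nA + 7/24 * b2 * nB + 1/6 * (a1 * b0 + a0 * b1) * C0
        + 1/24 * a0\<^sup>2 * b0 * C1 + 1/12 * a0 * b0\<^sup>2 * C2) * h^3
      + (1/64 * a1 * b1 * nA + (1/192 * a0 * b2 + 1/192 * a2 * b0 + 1/48 * a1 * b1) * C0
        + 1/96 * a0 * a1 * b0 * C1 + 1/48 * a0 * b0 * b1 * C2) * h^4
      + (1/960 * a1\<^sup>2 * b0 * C1 + 1/480 * a0 * b1\<^sup>2 * C2) * h^5"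
  proof -
    have X: "(a2 / 24 * nA + b2 / 24 * nB + (a0 * b1 + a1 * b0) / 12 * C0 + a0\<^sup>2 * b0 / 24 * C1 + a0 * b0\<^sup>2 / 12 * C2)
       \<le> (7/24 * a2 * nA + 1/12 * a1 * b0 * nA + 7/24 * b2 * nB + 1/6 * (a1 * b0 + a0 * b1) * C0
          + 1/24 * a0\<^sup>2 * b0 * C1 + 1/12 * a0 * b0\<^sup>2 * C2)"
    proof -
      have "0 \<le> a2 * nA" "0 \<le> a1 * b0 * nA" "0 \<le> b2 * nB" "0 \<le> (a0 * b1 + a1 * b0) * C0"
        using nn by simp_all
      then show ?thesis by (simp add: field_simps)
    qed
    have Y: "0 \<le> (1/64 * a1 * b1 * nA + (1/192 * a0 * b2 + 1/192 * a2 * b0 + 1/48 * a1 * b1) * C0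
          + 1/96 * a0 * a1 * b0 * C1 + 1/48 * a0 * b0 * b1 * C2) * h^4"
      using nn by (intro mult_nonneg_nonneg add_nonneg_nonneg) simp_all
    have Z: "0 \<le> (1/960 * a1\<^sup>2 * b0 * C1 + 1/480 * a0 * b1\<^sup>2 * C2) * h^5"
      using nn by (intro mult_nonneg_nonneg add_nonneg_nonneg) simp_all
    show ?thesis using mult_right_mono[OF X hp(2)] Y Z c3b by linarith
  qed
  have ih: "integral {h/2..h} f1 = integral {0 + h/2..0 + h} f1" by simp
  have ug2: "Ug2 f1 f2 H1 H2 0 h = Rep_sqm (exp (integral {h/2..h} f1 *\<^sub>R A) * exp (ig f2 h *\<^sub>R B) * exp (ig f1 (h/2) *\<^sub>R A))"
    by (simp add: Ug2_def eprop_exp Rep_mult A_def B_def ig_def)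
  have c4b: "opnorm (Ug2 f1 f2 H1 H2 0 h - U h) \<le> (b0 * a0\<^sup>2 / 24 * C1 + (b0 * a1 / 24 + a0 * b1 / 12) * C0
        + a0 * b0\<^sup>2 / 12 * opnorm (comm H2 (comm H2 H1))) * h ^ 3"
    using case4[OF ctx] by (simp add: ug2 opnorm_Rep W_def C0e C1e C2e' a0_def a1_def b0_def b1_def)
  have P4: "opnorm (Ug2 f1 f2 H1 H2 0 h - U h) \<le>
      ((7/12 * a0 * b1 + 11/24 * a1 * b0) * C0
        + 3/8 * a0\<^sup>2 * b0 * C1 + 1/12 * a0 * b0\<^sup>2 * opnorm (comm H2 (comm H2 H1))) * h^3"
  proof -
    have X: "b0 * a0\<^sup>2 / 24 * C1 + (b0 * a1 / 24 + a0 * b1 / 12) * C0 + a0 * b0\<^sup>2 / 12 * opnorm (comm H2 (comm H2 H1))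
      \<le> (7/12 * a0 * b1 + 11/24 * a1 * b0) * C0 + 3/8 * a0\<^sup>2 * b0 * C1 + 1/12 * a0 * b0\<^sup>2 * opnorm (comm H2 (comm H2 H1))"
    proof -
      have "0 \<le> a0\<^sup>2 * b0 * C1" "0 \<le> a0 * b1 * C0" "0 \<le> a1 * b0 * C0" using nn by simp_all
      then show ?thesis by (simp add: field_simps)
    qed
    show ?thesis using mult_right_mono[OF X hp(2)] c4b by linarith
  qed
  show ?thesis
    using P1 P2 P3 P4
    unfolding a0_def a1_def a2_def b0_def b1_def b2_def nA_def nB_def C0_def C1_def C2_def
    by simp
qed

end
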